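(* Let $S$ be a finite semigroup with an anti-involution $*$, let $R$ be a commutative ring with $1$, and let $\alpha$ be a twisting from $S$ into $R$ with $\alpha(x,y)=\alpha(y^*,x^* )$ for all $x,y\in S$. Suppose that for each $\mathcal D$-class $D$ there is an idempotent $1_D\in D$ with $1_D^*=1_D$; let $G_D$ be the $\mathcal H$-class of $1_D$. Suppose that $\alpha(x,y)=\alpha(x,z)$ for all $x,y,z\in S$ with $y\,\mathcal R\,z$. Suppose that for each $D$ the (untwisted) group algebra $R[G_D]$ is cellular with cell datum $(\Lambda_D,M_D,C,* )$, where $*$ is the linear extension of $*|_{G_D}$, and write $C^\lambda_{st}=\sum_{g\in G_D}c^\lambda_{st}(g)g$. Let $\mathcal D$ be the set of $\mathcal D$-classes, $\mathcal L_D$ the set of $\mathcal L$-classes in $D$, $\Lambda=\{(D,\lambda)\mid D\in\mathcal D,\lambda\in\Lambda_D\}$ ordered by $(D_1,\lambda_1)\le(D_2,\lambda_2)$ iff $D_1<_{\mathcal D}D_2$ or ($D_1=D_2$ and $\lambda_1\le\lambda_2$ in $\Lambda_{D_1}$), $M(D,\lambda)=\mathcal L_D\times M_D(\lambda)$, choose for each $L\in\mathcal L_D$ an element $u_L\in L$ with $u_L\,\mathcal R\,1_D$, and set \[C^{(D,\lambda)}_{(L,s)(K,t)}=\sum_{g\in G_D}c^\lambda_{st}(g)\,(u_L^*gu_K)\in R^\alpha[S].\] Then $R^\alpha[S]$ is cellular with cell datum $(\Lambda,M,C,* )$, where $*$ is the linear extension of $*$ to $R^\alpha[S]$.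
   Context: Green's relations on a semigroup $S$ ($S^1$ = $S$ with identity adjoined): $x\le_{\mathcal R}y$ iff $x\in yS^1$; $x\le_{\mathcal L}y$ iff $x\in S^1y$; $x\le_{\mathcal J}y$ iff $x\in S^1yS^1$; $\mathcal R,\mathcal L,\mathcal J$ the associated equivalences; $\mathcal H=\mathcal R\cap\mathcal L$; $\mathcal D$ generated by $\mathcal R\cup\mathcal L$. For finite $S$, $\mathcal D=\mathcal J$ and $\le_{\mathcal J}$ induces a partial order $\le_{\mathcal D}$ on $\mathcal D$-classes; $<_{\mathcal D}$ is its strict version. An anti-involution of $S$: $(x^* )^*=x$, $(xy)^*=y^*x^*$. A twisting $\alpha:S\times S\to R$ satisfies $\alpha(x,y)\alpha(xy,z)=\alpha(x,yz)\alpha(y,z)$; $R^\alpha[S]$ is the free $R$-module on $S$ with product $x\cdot y=\alpha(x,y)(xy)$. An anti-involution of an $R$-algebra is $R$-linear with $(a^* )^*=a$, $(ab)^*=b^*a^*$. Cellular algebra with cell datum $(\Lambda,M,C,* )$: (C1) $\Lambda$ finite poset, finite sets $M(\lambda)$, and $\{C^\lambda_{st}\}$ an $R$-basis; (C2) $*$ anti-involution with $(C^\lambda_{st})^*=C^\lambda_{ts}$; (C3) for all $\lambda,s,a$ there are $r_a(s',s)\in R$ with $aC^\lambda_{st}\in\sum_{s'}r_a(s',s)C^\lambda_{s't}+A(<\lambda)$ for all $t$, where $A(<\lambda)$ is the span of the $C^\mu_{s''t''}$ with $\mu<\lambda$. *)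

theory Defs
  imports Main
begin

definition R_le :: "'a::semigroup_mult \<Rightarrow> 'a \<Rightarrow> bool" where
  "R_le x y \<longleftrightarrow> x = y \<or> (\<exists>s. x = y * s)"

definition L_le :: "'a::semigroup_mult \<Rightarrow> 'a \<Rightarrow> bool" where
  "L_le x y \<longleftrightarrow> x = y \<or> (\<exists>s. x = s * y)"

definition J_le :: "'a::semigroup_mult \<Rightarrow> 'a \<Rightarrow> bool" where
  "J_le x y \<longleftrightarrow> x = y \<or> (\<exists>s. x = s * y) \<or> (\<exists>t. x = y * t) \<or> (\<exists>s t. x = s * y * t)"

definition R_eq :: "'a::semigroup_mult \<Rightarrow> 'a \<Rightarrow> bool" where
  "R_eq x y \<longleftrightarrow> R_le x y \<and> R_le y x"

definition L_eq :: "'a::semigroup_mult \<Rightarrow> 'a \<Rightarrow> bool" where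
  "L_eq x y \<longleftrightarrow> L_le x y \<and> L_le y x"

definition H_eq :: "'a::semigroup_mult \<Rightarrow> 'a \<Rightarrow> bool" where
  "H_eq x y \<longleftrightarrow> R_eq x y \<and> L_eq x y"

text \<open>D is the equivalence generated by R and L (both already equivalences).\<close>
definition D_eq :: "'a::semigroup_mult \<Rightarrow> 'a \<Rightarrow> bool" where
  "D_eq = (\<lambda>x y. R_eq x y \<or> L_eq x y)\<^sup>*\<^sup>*"

definition Dclasses :: "'a::semigroup_mult set set" where
  "Dclasses = range (\<lambda>x. {y. D_eq x y})"

definition Hclass :: "'a::semigroup_mult \<Rightarrow> 'a set" where
  "Hclass x = {y. H_eq x y}"

definition Lclasses_in :: "'a::semigroup_mult set \<Rightarrow> 'a set set" where
  "Lclasses_in D = (\<lambda>x. {y. L_eq x y}) ` D"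

text \<open>Order on D-classes induced by the J-preorder (D = J for finite semigroups).\<close>
definition Dclass_le :: "'a::semigroup_mult set \<Rightarrow> 'a set \<Rightarrow> bool" where
  "Dclass_le D1 D2 \<longleftrightarrow> (\<exists>x\<in>D1. \<exists>y\<in>D2. J_le x y)"

definition Dclass_less :: "'a::semigroup_mult set \<Rightarrow> 'a set \<Rightarrow> bool" where
  "Dclass_less D1 D2 \<longleftrightarrow> Dclass_le D1 D2 \<and> D1 \<noteq> D2"

definition sg_anti_involution :: "('a::semigroup_mult \<Rightarrow> 'a) \<Rightarrow> bool" where
  "sg_anti_involution st \<longleftrightarrow> (\<forall>x. st (st x) = x) \<and> (\<forall>x y. st (x * y) = st y * st x)"

definition twisting :: "('a::semigroup_mult \<Rightarrow> 'a \<Rightarrow> 'r::comm_ring_1) \<Rightarrow> bool" where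
  "twisting \<alpha> \<longleftrightarrow> (\<forall>x y z. \<alpha> x y * \<alpha> (x * y) z = \<alpha> x (y * z) * \<alpha> y z)"

text \<open>Elements of the free R-module on X are the functions vanishing outside X
  (coefficient of basis element x is f x).\<close>
definition in_alg :: "'x set \<Rightarrow> ('x \<Rightarrow> 'r::comm_ring_1) \<Rightarrow> bool" where
  "in_alg X f \<longleftrightarrow> (\<forall>x. x \<notin> X \<longrightarrow> f x = 0)"

text \<open>Twisted semigroup algebra product: x \<cdot> y = \<alpha>(x,y) (xy), extended bilinearly.\<close>
definition tw_mult :: "('a::{semigroup_mult,finite} \<Rightarrow> 'a \<Rightarrow> 'r::comm_ring_1)
    \<Rightarrow> ('a \<Rightarrow> 'r) \<Rightarrow> ('a \<Rightarrow> 'r) \<Rightarrow> ('a \<Rightarrow> 'r)" where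
  "tw_mult \<alpha> f g = (\<lambda>z. \<Sum>x\<in>UNIV. \<Sum>y\<in>UNIV. if x * y = z then \<alpha> x y * f x * g y else 0)"

text \<open>Linear extension of an involution st: (sum f(x) x)^* = sum f(x) x^*.\<close>
definition lin_star :: "('a \<Rightarrow> 'a) \<Rightarrow> ('a \<Rightarrow> 'r) \<Rightarrow> ('a \<Rightarrow> 'r)" where
  "lin_star st f = (\<lambda>z. f (st z))"

definition is_R_algebra :: "'x set \<Rightarrow> (('x \<Rightarrow> 'r::comm_ring_1) \<Rightarrow> ('x \<Rightarrow> 'r) \<Rightarrow> ('x \<Rightarrow> 'r)) \<Rightarrow> bool" where
  "is_R_algebra X mul \<longleftrightarrow>
     (\<forall>a b. in_alg X a \<longrightarrow> in_alg X b \<longrightarrow> in_alg X (mul a b)) \<and>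
     (\<forall>a b c. in_alg X a \<longrightarrow> in_alg X b \<longrightarrow> in_alg X c \<longrightarrow> mul (mul a b) c = mul a (mul b c)) \<and>
     (\<forall>a b c k. in_alg X a \<longrightarrow> in_alg X b \<longrightarrow> in_alg X c \<longrightarrow>
        mul (\<lambda>x. k * a x + b x) c = (\<lambda>x. k * mul a c x + mul b c x) \<and>
        mul c (\<lambda>x. k * a x + b x) = (\<lambda>x. k * mul c a x + mul c b x))"

definition alg_anti_involution :: "'x set \<Rightarrow> (('x \<Rightarrow> 'r::comm_ring_1) \<Rightarrow> ('x \<Rightarrow> 'r) \<Rightarrow> ('x \<Rightarrow> 'r))
    \<Rightarrow> (('x \<Rightarrow> 'r) \<Rightarrow> ('x \<Rightarrow> 'r)) \<Rightarrow> bool" where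
  "alg_anti_involution X mul st \<longleftrightarrow>
     (\<forall>a. in_alg X a \<longrightarrow> in_alg X (st a) \<and> st (st a) = a) \<and>
     (\<forall>a b k. in_alg X a \<longrightarrow> in_alg X b \<longrightarrow> st (\<lambda>x. k * a x + b x) = (\<lambda>x. k * st a x + st b x)) \<and>
     (\<forall>a b. in_alg X a \<longrightarrow> in_alg X b \<longrightarrow> st (mul a b) = mul (st b) (st a))"

definition cell_index :: "'l set \<Rightarrow> ('l \<Rightarrow> 'm set) \<Rightarrow> ('l \<times> 'm \<times> 'm) set" where
  "cell_index \<Lambda> M = Sigma \<Lambda> (\<lambda>l. M l \<times> M l)"

definition lower_span :: "'l set \<Rightarrow> ('l \<Rightarrow> 'l \<Rightarrow> bool) \<Rightarrow> ('l \<Rightarrow> 'm set)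
    \<Rightarrow> ('l \<Rightarrow> 'm \<Rightarrow> 'm \<Rightarrow> 'x \<Rightarrow> 'r::comm_ring_1) \<Rightarrow> 'l \<Rightarrow> ('x \<Rightarrow> 'r) set" where
  "lower_span \<Lambda> le M C l =
     {f. \<exists>c. f = (\<lambda>x. \<Sum>i\<in>{i\<in>cell_index \<Lambda> M. le (fst i) l \<and> fst i \<noteq> l}.
                        c i * C (fst i) (fst (snd i)) (snd (snd i)) x)}"

definition cellular_algebra :: "'x set \<Rightarrow> (('x \<Rightarrow> 'r::comm_ring_1) \<Rightarrow> ('x \<Rightarrow> 'r) \<Rightarrow> ('x \<Rightarrow> 'r))
    \<Rightarrow> (('x \<Rightarrow> 'r) \<Rightarrow> ('x \<Rightarrow> 'r)) \<Rightarrow> 'l set \<Rightarrow> ('l \<Rightarrow> 'l \<Rightarrow> bool) \<Rightarrow> ('l \<Rightarrow> 'm set)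
    \<Rightarrow> ('l \<Rightarrow> 'm \<Rightarrow> 'm \<Rightarrow> 'x \<Rightarrow> 'r) \<Rightarrow> bool" where
  "cellular_algebra X mul st \<Lambda> le M C \<longleftrightarrow>
     finite X \<and> is_R_algebra X mul \<and>
     \<comment> \<open>(C1)\<close>
     finite \<Lambda> \<and> (\<forall>l\<in>\<Lambda>. finite (M l)) \<and>
     (\<forall>a\<in>\<Lambda>. le a a) \<and> (\<forall>a\<in>\<Lambda>. \<forall>b\<in>\<Lambda>. le a b \<and> le b a \<longrightarrow> a = b) \<and>
     (\<forall>a\<in>\<Lambda>. \<forall>b\<in>\<Lambda>. \<forall>c\<in>\<Lambda>. le a b \<and> le b c \<longrightarrow> le a c) \<and>
     (\<forall>l\<in>\<Lambda>. \<forall>s\<in>M l. \<forall>t\<in>M l. in_alg X (C l s t)) \<and>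
     (\<forall>f. in_alg X f \<longrightarrow>
        (\<exists>!r. (\<forall>i. i \<notin> cell_index \<Lambda> M \<longrightarrow> r i = 0) \<and>
              f = (\<lambda>x. \<Sum>i\<in>cell_index \<Lambda> M. r i * C (fst i) (fst (snd i)) (snd (snd i)) x))) \<and>
     \<comment> \<open>(C2)\<close>
     alg_anti_involution X mul st \<and>
     (\<forall>l\<in>\<Lambda>. \<forall>s\<in>M l. \<forall>t\<in>M l. st (C l s t) = C l t s) \<and>
     \<comment> \<open>(C3)\<close>
     (\<forall>l\<in>\<Lambda>. \<forall>s\<in>M l. \<forall>a. in_alg X a \<longrightarrow>
        (\<exists>r. \<forall>t\<in>M l. (\<lambda>x. mul a (C l s t) x - (\<Sum>s'\<in>M l. r s' * C l s' t x))
                        \<in> lower_span \<Lambda> le M C l))"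

definition cor_Lambda :: "('a::semigroup_mult set \<Rightarrow> 'l set) \<Rightarrow> ('a set \<times> 'l) set" where
  "cor_Lambda \<Lambda>D = Sigma Dclasses \<Lambda>D"

definition cor_le :: "('a::semigroup_mult set \<Rightarrow> 'l \<Rightarrow> 'l \<Rightarrow> bool)
    \<Rightarrow> ('a set \<times> 'l) \<Rightarrow> ('a set \<times> 'l) \<Rightarrow> bool" where
  "cor_le leD p q \<longleftrightarrow> Dclass_less (fst p) (fst q) \<or> (fst p = fst q \<and> leD (fst p) (snd p) (snd q))"

definition cor_M :: "('a::semigroup_mult set \<Rightarrow> 'l \<Rightarrow> 'm set) \<Rightarrow> ('a set \<times> 'l) \<Rightarrow> ('a set \<times> 'm) set" where
  "cor_M MD p = Lclasses_in (fst p) \<times> MD (fst p) (snd p)"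

definition cor_C :: "('a::semigroup_mult \<Rightarrow> 'a) \<Rightarrow> ('a set \<Rightarrow> 'a) \<Rightarrow> ('a set \<Rightarrow> 'a)
    \<Rightarrow> ('a set \<Rightarrow> 'l \<Rightarrow> 'm \<Rightarrow> 'm \<Rightarrow> 'a \<Rightarrow> 'r::comm_ring_1)
    \<Rightarrow> ('a set \<times> 'l) \<Rightarrow> ('a set \<times> 'm) \<Rightarrow> ('a set \<times> 'm) \<Rightarrow> 'a \<Rightarrow> 'r" where
  "cor_C st one u CD p Ls Kt =
     (\<lambda>z. \<Sum>g\<in>Hclass (one (fst p)).
        if st (u (fst Ls)) * g * u (fst Kt) = z then CD (fst p) (snd p) (snd Ls) (snd Kt) g else 0)"

end

theory Submission
  imports Defs
begin

lemma R_le_refl[simp]: "R_le x x" by (simp add: R_le_def)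
lemma L_le_refl[simp]: "L_le x x" by (simp add: L_le_def)
lemma J_le_refl[simp]: "J_le x x" by (simp add: J_le_def)

lemma R_le_trans: "R_le x y \<Longrightarrow> R_le y z \<Longrightarrow> R_le x z"
  unfolding R_le_def by (metis mult.assoc)
lemma L_le_trans: "L_le x y \<Longrightarrow> L_le y z \<Longrightarrow> L_le x z"
  unfolding L_le_def by (metis mult.assoc)
lemma J_le_trans: "J_le x y \<Longrightarrow> J_le y z \<Longrightarrow> J_le x z"
  unfolding J_le_def by (elim disjE exE) (simp_all add: mult.assoc[symmetric], (metis mult.assoc)+)
lemma R_le_J: "R_le x y \<Longrightarrow> J_le x y" unfolding R_le_def J_le_def by blast
lemma L_le_J: "L_le x y \<Longrightarrow> J_le x y" unfolding L_le_def J_le_def by blast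
lemma R_le_mult[simp]: "R_le (x*y) x" unfolding R_le_def by blast
lemma L_le_mult[simp]: "L_le (x*y) y" unfolding L_le_def by blast
lemma J_le_multL[simp]: "J_le (x*y) y" unfolding J_le_def by blast
lemma J_le_multR[simp]: "J_le (x*y) x" unfolding J_le_def by blast

lemma R_eq_refl[simp]: "R_eq x x" by (simp add: R_eq_def)
lemma R_eq_sym: "R_eq x y \<Longrightarrow> R_eq y x" by (simp add: R_eq_def)
lemma R_eq_trans: "R_eq x y \<Longrightarrow> R_eq y z \<Longrightarrow> R_eq x z" unfolding R_eq_def using R_le_trans by blast
lemma L_eq_refl[simp]: "L_eq x x" by (simp add: L_eq_def)
lemma L_eq_sym: "L_eq x y \<Longrightarrow> L_eq y x" by (simp add: L_eq_def)
lemma L_eq_trans: "L_eq x y \<Longrightarrow> L_eq y z \<Longrightarrow> L_eq x z" unfolding L_eq_def using L_le_trans by blast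

lemma D_eq_refl[simp]: "D_eq x x" by (simp add: D_eq_def)
lemma D_eq_trans: "D_eq x y \<Longrightarrow> D_eq y z \<Longrightarrow> D_eq x z" unfolding D_eq_def by (rule rtranclp_trans)
lemma D_eq_sym: "D_eq x y \<Longrightarrow> D_eq y x" unfolding D_eq_def
proof (induction rule: rtranclp_induct)
  case base then show ?case by simp
next
  case (step y z)
  then have "(\<lambda>x y. R_eq x y \<or> L_eq x y) z y" using R_eq_sym L_eq_sym by blast
  then show ?case using step(3) by (rule converse_rtranclp_into_rtranclp)
qed
lemma R_eq_D: "R_eq x y \<Longrightarrow> D_eq x y" unfolding D_eq_def by auto
lemma L_eq_D: "L_eq x y \<Longrightarrow> D_eq x y" unfolding D_eq_def by auto
lemma D_eq_J: "D_eq x y \<Longrightarrow> J_le x y \<and> J_le y x" unfolding D_eq_def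
proof (induction rule: rtranclp_induct)
  case base then show ?case by simp
next
  case (step y z)
  then show ?case unfolding R_eq_def L_eq_def using R_le_J L_le_J J_le_trans by blast
qed


fun spow :: "'a::semigroup_mult \<Rightarrow> nat \<Rightarrow> 'a" where
  "spow b 0 = b" | "spow b (Suc n) = spow b n * b"

lemma spow_comm: "spow b n * b = b * spow b n"
  by (induction n) (simp_all add: mult.assoc)
lemma spow_add: "spow b m * spow b n = spow b (m + n + 1)"
  by (induction n) (simp_all add: mult.assoc[symmetric])

lemma spow_shift: "spow b i = spow b j \<Longrightarrow> spow b (i+k) = spow b (j+k)"
proof (induction k)
  case 0 then show ?case by simp
next
  case (Suc k)
  have "spow b (i + Suc k) = spow b (i+k) * b" by simp
  also have "\<dots> = spow b (j+k) * b" using Suc by simp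
  finally show ?case by simp
qed

lemma spow_period:
  assumes "spow b i = spow b (i + p)"
  shows "spow b (i + k) = spow b (i + k + m * p)"
proof (induction m arbitrary: k)
  case 0 then show ?case by simp
next
  case (Suc m)
  have "spow b (i + k) = spow b (i + p + k)" using spow_shift[OF assms] .
  also have "\<dots> = spow b (i + (k + p))" by (simp add: algebra_simps)
  also have "\<dots> = spow b (i + (k + p) + m * p)" by (rule Suc)
  finally show ?case by (simp add: algebra_simps)
qed

lemma spow_idem:
  fixes b :: "'a::{semigroup_mult,finite}"
  shows "\<exists>n. spow b n * spow b n = spow b n"
proof -
  have "\<not> inj (spow b)"
  proof
    assume "inj (spow b)"
    then have "infinite (range (spow b))" using finite_imageD by blast
    then show False by simp
  qed
  then obtain i j where ij: "spow b i = spow b j" "i < j" unfolding inj_def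
    by (metis nat_neq_iff)
  define p where "p = j - i"
  have ip: "spow b i = spow b (i + p)" "p > 0" using ij unfolding p_def by auto
  define N where "N = p * (i + 1) - 1"
  have N1: "N + 1 = p * (i+1)" using ip(2) unfolding N_def by (simp add: Suc_le_eq)
  have "p * (i+1) \<ge> 1 * (i + 1)" using ip(2) by (intro mult_right_mono) auto
  then have Ni: "N \<ge> i" using N1 by simp
  have "i + (N - i) + (i+1) * p = N + N + 1" using N1 Ni by (simp add: algebra_simps)
  then have "spow b N * spow b N = spow b (i + (N - i) + (i+1) * p)" using spow_add[of b N N]
    by simp
  also have "\<dots> = spow b (i + (N - i))" using spow_period[OF ip(1)] by metis
  also have "\<dots> = spow b N" using Ni by simp
  finally show ?thesis by blast
qed

lemma stab_core:
  fixes y :: "'a::{semigroup_mult,finite}"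
  assumes "y = a * y * t"
  shows "\<exists>n. y = spow a n * y"
proof -
  have all: "y = spow a n * y * spow t n" for n
  proof (induction n)
    case 0 then show ?case using assms by simp
  next
    case (Suc n)
    have "spow a (Suc n) * y * spow t (Suc n) = spow a n * (a * y * t) * spow t n"
      by (simp only: spow.simps spow_comm[of t n] mult.assoc)
    then show ?case using Suc assms by metis
  qed
  obtain n where e: "spow t n * spow t n = spow t n" using spow_idem by blast
  have ye: "y * spow t n = y"
  proof -
    have "y * spow t n = spow a n * y * (spow t n * spow t n)" by (metis all mult.assoc)
    also have "\<dots> = y" using e all[of n] by metis
    finally show ?thesis .
  qed
  have "spow a n * y = spow a n * y * spow t n" by (metis ye mult.assoc)
  then show ?thesis using all[of n] by metis
qed

lemma spow_split: "n > 0 \<Longrightarrow> spow a n = spow a (n - 1) * a"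
  by (cases n) auto

lemma stab_L:
  fixes x y :: "'a::{semigroup_mult,finite}"
  assumes "J_le y (x * y)"
  shows "L_eq (x * y) y"
proof -
  have main: "\<exists>c. y = c * (x * y)" if h: "y = a * y * t" "\<exists>s. a = s * x" for a t
  proof -
    obtain s where s: "a = s * x" using h(2) by blast
    obtain n where n: "y = spow a n * y" using stab_core[OF h(1)] by blast
    show ?thesis
    proof (cases "n = 0")
      case True then have "spow a n * y = s * (x * y)" using s by (simp add: mult.assoc)
      then show ?thesis using n by metis
    next
      case False
      then have "spow a n * y = (spow a (n - 1) * s) * (x * y)" using spow_split[of n a] unfolding s by (simp add: mult.assoc)
      then show ?thesis using n by metis
    qed
  qed
  have main2: "\<exists>c. y = c * (x * y) \<or> y = x * y" if h: "y = x * y * t" for t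
  proof -
    obtain n where n: "y = spow x n * y" using stab_core[OF h(1)] by blast
    show ?thesis
    proof (cases "n = 0")
      case True then have "spow x n * y = x * y" by simp
      then show ?thesis using n by metis
    next
      case False
      then have "spow x n * y = (spow x (n - 1)) * (x * y)" using spow_split[of n x] by (simp add: mult.assoc)
      then show ?thesis using n by metis
    qed
  qed
  have "y = x * y \<or> (\<exists>s. y = s * (x * y))"
    using assms unfolding J_le_def
  proof (elim disjE exE)
    assume "y = x * y" then show ?thesis by blast
  next
    fix s assume "y = s * (x * y)" then show ?thesis by blast
  next
    fix t assume "y = x * y * t" then show ?thesis using main2 by blast
  next
    fix s t assume "y = s * (x * y) * t"
    then have "y = (s * x) * y * t" by (metis mult.assoc)
    then show ?thesis using main[of "s * x" t] by blast
  qed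
  then show ?thesis unfolding L_eq_def L_le_def by blast
qed

locale inv =
  fixes st :: "'a::{semigroup_mult,finite} \<Rightarrow> 'a"
  assumes inv: "sg_anti_involution st"
begin

lemma st_st[simp]: "st (st x) = x" using inv unfolding sg_anti_involution_def by blast
lemma st_mult[simp]: "st (x * y) = st y * st x" using inv unfolding sg_anti_involution_def by blast
lemma st_inj[simp]: "st x = st y \<longleftrightarrow> x = y" by (metis st_st)
lemma st_eq_iff: "st x = y \<longleftrightarrow> x = st y" by (metis st_st)

lemma R_le_st: "R_le x y \<Longrightarrow> L_le (st x) (st y)"
  unfolding R_le_def L_le_def by auto
lemma L_le_st: "L_le x y \<Longrightarrow> R_le (st x) (st y)"
  unfolding R_le_def L_le_def by auto
lemma J_le_st: "J_le x y \<Longrightarrow> J_le (st x) (st y)"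
  unfolding J_le_def by (elim disjE exE) (auto simp: mult.assoc)
lemma R_eq_st: "R_eq x y \<Longrightarrow> L_eq (st x) (st y)"
  unfolding R_eq_def L_eq_def using R_le_st by blast
lemma L_eq_st: "L_eq x y \<Longrightarrow> R_eq (st x) (st y)"
  unfolding R_eq_def L_eq_def using L_le_st by blast
lemma H_eq_st: "H_eq x y \<Longrightarrow> H_eq (st x) (st y)"
  unfolding H_eq_def using R_eq_st L_eq_st by blast
lemma D_eq_st: "D_eq x y \<Longrightarrow> D_eq (st x) (st y)"
  unfolding D_eq_def
proof (induction rule: rtranclp_induct)
  case base then show ?case by simp
next
  case (step y z)
  then have "(\<lambda>x y. R_eq x y \<or> L_eq x y) (st y) (st z)" using R_eq_st L_eq_st by blast
  with step(3) show ?case by (rule rtranclp.rtrancl_into_rtrancl)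
qed

lemma stab_R:
  fixes x y :: 'a
  assumes "J_le x (x * y)"
  shows "R_eq (x * y) x"
proof -
  have "J_le (st x) (st y * st x)" using J_le_st[OF assms] by simp
  then have "L_eq (st y * st x) (st x)" by (rule stab_L)
  then have "R_eq (st (st y * st x)) (st (st x))" by (rule L_eq_st)
  then show ?thesis by simp
qed

lemma J_D:
  fixes x y :: 'a
  assumes "J_le x y" "J_le y x"
  shows "D_eq x y"
  using assms(1) unfolding J_le_def
proof (elim disjE exE)
  assume "x = y" then show ?thesis by simp
next
  fix s assume x: "x = s * y"
  then have "J_le y (s * y)" using assms(2) by simp
  then have "L_eq (s * y) y" by (rule stab_L)
  then show ?thesis using x L_eq_D by simp
next
  fix t assume x: "x = y * t"
  then have "J_le y (y * t)" using assms(2) by simp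
  then have "R_eq (y * t) y" by (rule stab_R)
  then show ?thesis using x R_eq_D by simp
next
  fix s t assume x: "x = s * y * t"
  have "J_le y (y * t)" using assms(2) x J_le_trans[of y x "y*t"] by (simp add: mult.assoc)
  then have 1: "R_eq (y * t) y" by (rule stab_R)
  have "J_le (y * t) (s * (y * t))" using assms(2) x J_le_trans[of "y*t" y "s * (y * t)"]
    by (simp add: mult.assoc)
  then have 2: "L_eq (s * (y * t)) (y * t)" by (rule stab_L)
  show ?thesis using 1 2 x by (metis D_eq_trans L_eq_D R_eq_D mult.assoc)
qed

end

locale cor7 = inv st
  for st :: "'a::{semigroup_mult,finite} \<Rightarrow> 'a" +
  fixes \<alpha> :: "'a \<Rightarrow> 'a \<Rightarrow> 'r::comm_ring_1"
    and one :: "'a set \<Rightarrow> 'a"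
    and u :: "'a set \<Rightarrow> 'a"
    and \<Lambda>D :: "'a set \<Rightarrow> 'l set"
    and leD :: "'a set \<Rightarrow> 'l \<Rightarrow> 'l \<Rightarrow> bool"
    and MD :: "'a set \<Rightarrow> 'l \<Rightarrow> 'm set"
    and CD :: "'a set \<Rightarrow> 'l \<Rightarrow> 'm \<Rightarrow> 'm \<Rightarrow> 'a \<Rightarrow> 'r"
  assumes tw: "twisting \<alpha>"
    and tw_st: "\<forall>x y. \<alpha> x y = \<alpha> (st y) (st x)"
    and one_ax: "\<forall>D\<in>Dclasses. one D \<in> D \<and> one D * one D = one D \<and> st (one D) = one D"
    and tw_R: "\<forall>x y z. R_eq y z \<longrightarrow> \<alpha> x y = \<alpha> x z"
    and cell: "\<forall>D\<in>Dclasses. cellular_algebra (Hclass (one D)) (tw_mult (\<lambda>_ _. 1)) (lin_star st)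
                          (\<Lambda>D D) (leD D) (MD D) (CD D)"
    and u_ax: "\<forall>D\<in>Dclasses. \<forall>L\<in>Lclasses_in D. u L \<in> L \<and> R_eq (u L) (one D)"
begin

definition "G D = Hclass (one D)"
definition "v L = st (u L)"
definition "pp D K = (SOME p. u K * p = one D \<and> p * one D = p)"
definition "pq D L = st (pp D L)"
definition "Dcl z = {y. D_eq z y}"
definition "Lcl z = {y. L_eq z y}"

lemma Dcl_in: "Dcl z \<in> Dclasses" unfolding Dcl_def Dclasses_def by blast
lemma Dcl_self: "z \<in> Dcl z" unfolding Dcl_def by simp
lemma Dcl_eq: "D \<in> Dclasses \<Longrightarrow> z \<in> D \<Longrightarrow> D = Dcl z"
  unfolding Dclasses_def Dcl_def using D_eq_sym D_eq_trans by blast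
lemma Dcl_eq_iff: "Dcl x = Dcl y \<longleftrightarrow> D_eq x y"
proof
  assume "Dcl x = Dcl y" then show "D_eq x y" using Dcl_self[of y] unfolding Dcl_def by blast
next
  assume "D_eq x y" then show "Dcl x = Dcl y" unfolding Dcl_def using D_eq_sym D_eq_trans by blast
qed
lemma one_in: "D \<in> Dclasses \<Longrightarrow> one D \<in> D" using one_ax by blast
lemma one_idem[simp]: "D \<in> Dclasses \<Longrightarrow> one D * one D = one D" using one_ax by blast
lemma one_st[simp]: "D \<in> Dclasses \<Longrightarrow> st (one D) = one D" using one_ax by blast
lemma D_mem: "D \<in> Dclasses \<Longrightarrow> z \<in> D \<longleftrightarrow> D_eq (one D) z"
  using Dcl_eq[OF _ one_in] unfolding Dcl_def by blast
lemma Lcl_eq: fixes L :: "'a set" shows "L \<in> Lclasses_in D \<Longrightarrow> y \<in> L \<Longrightarrow> L = Lcl y"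
  unfolding Lclasses_in_def Lcl_def using L_eq_sym L_eq_trans by blast
lemma Lcl_in: fixes D :: "'a set" shows "D \<in> Dclasses \<Longrightarrow> z \<in> D \<Longrightarrow> Lcl z \<in> Lclasses_in D"
  unfolding Lclasses_in_def Lcl_def by blast
lemma Lcl_sub: fixes D :: "'a set" assumes "D \<in> Dclasses" "L \<in> Lclasses_in D" "y \<in> L" shows "y \<in> D"
proof -
  obtain x where x: "x \<in> D" "L = {y. L_eq x y}" using assms(2) unfolding Lclasses_in_def by blast
  then have "D_eq (one D) x" "D_eq x y" using D_mem[OF assms(1)] L_eq_D assms(3) by auto
  then show ?thesis using D_mem[OF assms(1)] D_eq_trans by blast
qed
lemma u_in: "D \<in> Dclasses \<Longrightarrow> L \<in> Lclasses_in D \<Longrightarrow> u L \<in> L" using u_ax by blast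
lemma u_R: "D \<in> Dclasses \<Longrightarrow> L \<in> Lclasses_in D \<Longrightarrow> R_eq (u L) (one D)" using u_ax by blast
lemma u_D: "D \<in> Dclasses \<Longrightarrow> L \<in> Lclasses_in D \<Longrightarrow> u L \<in> D" using u_in Lcl_sub by blast
lemma Lcl_u: "D \<in> Dclasses \<Longrightarrow> L \<in> Lclasses_in D \<Longrightarrow> L = Lcl (u L)" using u_in Lcl_eq by blast

lemma e_u: assumes "D \<in> Dclasses" "L \<in> Lclasses_in D" shows "one D * u L = u L"
proof -
  have "R_le (u L) (one D)" using u_R[OF assms] unfolding R_eq_def by blast
  then consider "u L = one D" | s where "u L = one D * s" unfolding R_le_def by blast
  then show ?thesis
  proof cases
    case 1 then show ?thesis using one_idem[OF assms(1)] by simp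
  next
    case 2 then show ?thesis using one_idem[OF assms(1)] by (simp add: mult.assoc[symmetric])
  qed
qed

lemma pp_ex: assumes "D \<in> Dclasses" "L \<in> Lclasses_in D"
  shows "u L * pp D L = one D \<and> pp D L * one D = pp D L"
proof -
  have "R_le (one D) (u L)" using u_R[OF assms] unfolding R_eq_def by blast
  then consider "one D = u L" | s where "one D = u L * s" unfolding R_le_def by blast
  then have "\<exists>p. u L * p = one D \<and> p * one D = p"
  proof cases
    case 1 then show ?thesis using one_idem[OF assms(1)] by metis
  next
    case 2
    have "u L * (s * one D) = one D * one D" by (simp only: mult.assoc[symmetric] 2[symmetric])
    moreover have "(s * one D) * one D = s * (one D * one D)" by (simp only: mult.assoc)
    ultimately have "u L * (s * one D) = one D \<and> (s * one D) * one D = s * one D"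
      using one_idem[OF assms(1)] by simp
    then show ?thesis by blast
  qed
  then show ?thesis unfolding pp_def by (rule someI_ex)
qed

lemma u_pp: "D \<in> Dclasses \<Longrightarrow> L \<in> Lclasses_in D \<Longrightarrow> u L * pp D L = one D" using pp_ex by blast
lemma pp_e: "D \<in> Dclasses \<Longrightarrow> L \<in> Lclasses_in D \<Longrightarrow> pp D L * one D = pp D L" using pp_ex by blast
lemma v_e: "D \<in> Dclasses \<Longrightarrow> L \<in> Lclasses_in D \<Longrightarrow> v L * one D = v L"
  unfolding v_def using e_u[of D L] by (metis one_st st_mult)
lemma pq_v: "D \<in> Dclasses \<Longrightarrow> L \<in> Lclasses_in D \<Longrightarrow> pq D L * v L = one D"
  unfolding v_def pq_def using u_pp[of D L] by (metis one_st st_mult)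
lemma e_pq: "D \<in> Dclasses \<Longrightarrow> L \<in> Lclasses_in D \<Longrightarrow> one D * pq D L = pq D L"
  unfolding pq_def using pp_e[of D L] by (metis one_st st_mult)
lemma upu: "D \<in> Dclasses \<Longrightarrow> L \<in> Lclasses_in D \<Longrightarrow> u L * pp D L * u L = u L"
  by (simp add: u_pp e_u)
lemma vpv: "D \<in> Dclasses \<Longrightarrow> L \<in> Lclasses_in D \<Longrightarrow> v L * pq D L * v L = v L"
  by (simp add: pq_v v_e mult.assoc)
lemma v_L: "D \<in> Dclasses \<Longrightarrow> L \<in> Lclasses_in D \<Longrightarrow> L_eq (v L) (one D)"
  unfolding v_def using R_eq_st[OF u_R, of D L] by simp

lemma R_le_prod: fixes e g h :: 'a assumes "R_le e g" "R_le e h" "g * e = g" shows "R_le e (g * h)"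
proof -
  have "e = g * h \<or> (\<exists>s. e = g * h * s)"
  using assms(1,2) unfolding R_le_def
proof (elim disjE exE)
  assume a: "e = g" "e = h" then have "e = g * h" using assms(3) by simp
  then show ?thesis by blast
next
  fix t assume a: "e = g" "e = h * t"
  have "e = g * e" using assms(3) a(1) by simp
  also have "\<dots> = g * h * t" using a(2) by (simp add: mult.assoc)
  finally show ?thesis by blast
next
  fix t assume a: "e = g * t" "e = h"
  have "g * h * t = g * e * t" using a(2) by simp
  also have "\<dots> = e" using assms(3) a(1) by simp
  finally show ?thesis by (metis)
next
  fix t1 t2 assume a: "e = g * t1" "e = h * t2"
  have "g * h * (t2 * t1) = g * e * t1" using a(2) by (simp add: mult.assoc)
  also have "\<dots> = e" using assms(3) a(1) by simp
  finally show ?thesis by metis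
qed
  then show ?thesis unfolding R_le_def .
qed

lemma L_le_prod: fixes e g h :: 'a assumes "L_le e g" "L_le e h" "e * h = h" shows "L_le e (g * h)"
proof -
  have "R_le (st e) (st h)" "R_le (st e) (st g)" using assms L_le_st by auto
  moreover have "st h * st e = st h" using assms(3) by (metis st_mult)
  ultimately have "R_le (st e) (st h * st g)" by (rule R_le_prod)
  then have "L_le (st (st e)) (st (st h * st g))" by (rule R_le_st)
  then show ?thesis by simp
qed

lemma G_props: assumes "D \<in> Dclasses" "g \<in> G D"
  shows "one D * g = g" "g * one D = g" "R_le (one D) g" "L_le (one D) g"
proof -
  have h: "H_eq (one D) g" using assms(2) unfolding G_def Hclass_def by simp
  then have a: "R_le g (one D)" "L_le g (one D)" "R_le (one D) g" "L_le (one D) g"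
    unfolding H_eq_def R_eq_def L_eq_def by auto
  show "R_le (one D) g" "L_le (one D) g" by fact+
  from a(1) consider "g = one D" | s where "g = one D * s" unfolding R_le_def by blast
  then show "one D * g = g"
  proof cases
    case 1 then show ?thesis using assms(1) by simp
  next
    case 2 then show ?thesis using assms(1) by (simp add: mult.assoc[symmetric])
  qed
  from a(2) consider "g = one D" | s where "g = s * one D" unfolding L_le_def by blast
  then show "g * one D = g"
  proof cases
    case 1 then show ?thesis using assms(1) by simp
  next
    case 2 then show ?thesis using assms(1) by (simp add: mult.assoc)
  qed
qed

lemma G_I: assumes "D \<in> Dclasses" "one D * g = g" "g * one D = g" "R_le (one D) g" "L_le (one D) g"
  shows "g \<in> G D"
proof -
  have "R_le g (one D)" unfolding R_le_def using assms(2) by (intro disjI2 exI[of _ g]) simp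
  moreover have "L_le g (one D)" unfolding L_le_def using assms(3) by (intro disjI2 exI[of _ g]) simp
  ultimately show ?thesis using assms(4,5) unfolding G_def Hclass_def H_eq_def R_eq_def L_eq_def by simp
qed

lemma one_G: "D \<in> Dclasses \<Longrightarrow> one D \<in> G D" unfolding G_def Hclass_def H_eq_def by simp
lemma G_st: assumes "D \<in> Dclasses" "g \<in> G D" shows "st g \<in> G D"
proof -
  have "H_eq (one D) g" using assms(2) unfolding G_def Hclass_def by simp
  then have "H_eq (st (one D)) (st g)" by (rule H_eq_st)
  then show ?thesis using assms(1) unfolding G_def Hclass_def by simp
qed
lemma G_sub: "D \<in> Dclasses \<Longrightarrow> g \<in> G D \<Longrightarrow> g \<in> D"
  unfolding G_def Hclass_def H_eq_def using D_mem R_eq_D by blast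
lemma G_mult: assumes "D \<in> Dclasses" "g \<in> G D" "h \<in> G D" shows "g * h \<in> G D"
proof (rule G_I[OF assms(1)])
  show "one D * (g * h) = g * h" using G_props(1)[OF assms(1,2)] by (simp add: mult.assoc[symmetric])
  show "g * h * one D = g * h" using G_props(2)[OF assms(1,3)] by (simp add: mult.assoc)
  show "R_le (one D) (g * h)" using G_props[OF assms(1,2)] G_props[OF assms(1,3)] by (intro R_le_prod)
  show "L_le (one D) (g * h)" using G_props[OF assms(1,2)] G_props[OF assms(1,3)] by (intro L_le_prod)
qed

end

context cor7 begin

lemma Lcl_cong: "L_eq a b \<Longrightarrow> Lcl a = Lcl b"
  unfolding Lcl_def using L_eq_sym L_eq_trans by blast

lemma factor:
  assumes D: "D \<in> Dclasses" and L: "L \<in> Lclasses_in D"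
    and w: "R_eq w (v L)" "L_le (one D) w" "w * one D = w"
  shows "pq D L * w \<in> G D" "v L * (pq D L * w) = w"
proof -
  have vw: "v L * pq D L * w = w"
  proof -
    from w(1) consider "w = v L" | s where "w = v L * s" unfolding R_eq_def R_le_def by blast
    then show ?thesis
    proof cases
      case 1 then show ?thesis using vpv[OF D L] by simp
    next
      case 2
      have "v L * pq D L * (v L * s) = (v L * pq D L * v L) * s" by (simp add: mult.assoc)
      then show ?thesis using 2 vpv[OF D L] by simp
    qed
  qed
  then show "v L * (pq D L * w) = w" by (simp add: mult.assoc)
  show "pq D L * w \<in> G D"
  proof (rule G_I[OF D])
    show "one D * (pq D L * w) = pq D L * w" using e_pq[OF D L] by (simp add: mult.assoc[symmetric])
    show "pq D L * w * one D = pq D L * w" using w(3) by (simp add: mult.assoc)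
    from w(1) consider "v L = w" | t where "v L = w * t" unfolding R_eq_def R_le_def by blast
    then show "R_le (one D) (pq D L * w)"
    proof cases
      case 1 then show ?thesis using pq_v[OF D L] by simp
    next
      case 2 then have "one D = pq D L * w * t" using pq_v[OF D L] by (simp add: mult.assoc)
      then show ?thesis unfolding R_le_def by blast
    qed
    from w(2) consider "one D = w" | s where "one D = s * w" unfolding L_le_def by blast
    then show "L_le (one D) (pq D L * w)"
    proof cases
      case 1 then have "one D = v L * (pq D L * w)" using vw by (simp add: mult.assoc)
      then show ?thesis unfolding L_le_def by blast
    next
      case 2 then have "one D = (s * v L) * (pq D L * w)" using vw by (simp add: mult.assoc)
      then show ?thesis unfolding L_le_def by blast
    qed
  qed
qed

lemma dec_props:
  assumes D: "D \<in> Dclasses" and L: "L \<in> Lclasses_in D" and K: "K \<in> Lclasses_in D"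
    and g: "g \<in> G D"
  shows "R_eq (v L * g * u K) (v L)" "L_eq (v L * g * u K) (u K)" "v L * g * u K \<in> D"
    "pq D L * (v L * g * u K) * pp D K = g"
proof -
  note gp = G_props[OF D g]
  have "pq D L * (v L * g * u K) * pp D K = (pq D L * v L) * g * (u K * pp D K)"
    by (simp add: mult.assoc)
  also have "\<dots> = g" using pq_v[OF D L] u_pp[OF D K] gp by simp
  finally show 4: "pq D L * (v L * g * u K) * pp D K = g" .
  have a: "v L * g * u K * pp D K = v L * g" using u_pp[OF D K] gp by (simp add: mult.assoc)
  have "R_le (v L) (v L * g * u K)"
  proof -
    from gp(3) consider "one D = g" | t where "one D = g * t" unfolding R_le_def by blast
    then show ?thesis
    proof cases
      case 1 then have "v L * g = v L" using v_e[OF D L] by simp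
      then have "v L = (v L * g * u K) * pp D K" using a by simp
      then show ?thesis unfolding R_le_def by blast
    next
      case 2 then have c: "v L * g * t = v L" using v_e[OF D L] by (simp add: mult.assoc)
      have "(v L * g * u K) * (pp D K * t) = v L * g * u K * pp D K * t" by (simp only: mult.assoc)
      also have "\<dots> = v L" using a c by simp
      finally have "v L = (v L * g * u K) * (pp D K * t)" by simp
      then show ?thesis unfolding R_le_def by blast
    qed
  qed
  moreover have "R_le (v L * g * u K) (v L)" unfolding R_le_def using mult.assoc by blast
  ultimately show R: "R_eq (v L * g * u K) (v L)" unfolding R_eq_def by blast
  have b: "pq D L * (v L * g * u K) = g * u K" using pq_v[OF D L] gp by (simp add: mult.assoc[symmetric])
  have "L_le (u K) (v L * g * u K)"
  proof -
    from gp(4) consider "one D = g" | s where "one D = s * g" unfolding L_le_def by blast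
    then show ?thesis
    proof cases
      case 1 then have "g * u K = u K" using e_u[OF D K] by simp
      then have "u K = pq D L * (v L * g * u K)" using b by simp
      then show ?thesis unfolding L_le_def by blast
    next
      case 2 then have c: "s * (g * u K) = u K" using e_u[OF D K] by (simp add: mult.assoc[symmetric])
      have "(s * pq D L) * (v L * g * u K) = s * (pq D L * (v L * g * u K))" by (simp only: mult.assoc)
      also have "\<dots> = u K" using b c by simp
      finally have "u K = (s * pq D L) * (v L * g * u K)" by simp
      then show ?thesis unfolding L_le_def by blast
    qed
  qed
  moreover have "L_le (v L * g * u K) (u K)" unfolding L_le_def by blast
  ultimately show "L_eq (v L * g * u K) (u K)" unfolding L_eq_def by blast
  have "D_eq (v L * g * u K) (one D)" using R v_L[OF D L] R_eq_D L_eq_D D_eq_trans by blast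
  then show "v L * g * u K \<in> D" using D_mem[OF D] D_eq_sym by blast
qed

lemma dec_uniq:
  assumes D: "D \<in> Dclasses" and L: "L \<in> Lclasses_in D" and K: "K \<in> Lclasses_in D"
    and g: "g \<in> G D"
    and D': "D' \<in> Dclasses" and L': "L' \<in> Lclasses_in D'" and K': "K' \<in> Lclasses_in D'"
    and g': "g' \<in> G D'"
    and eq: "v L * g * u K = v L' * g' * u K'"
  shows "D = D'" "L = L'" "K = K'" "g = g'"
proof -
  note p = dec_props[OF D L K g] and p' = dec_props[OF D' L' K' g']
  have "D = Dcl (v L * g * u K)" by (rule Dcl_eq[OF D p(3)])
  moreover have "D' = Dcl (v L * g * u K)" unfolding eq by (rule Dcl_eq[OF D' p'(3)])
  ultimately show DD: "D = D'" by simp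
  have "R_eq (v L) (v L * g * u K)" using p(1) by (rule R_eq_sym)
  moreover have "R_eq (v L * g * u K) (v L')" unfolding eq by (rule p'(1))
  ultimately have "R_eq (v L) (v L')" by (rule R_eq_trans)
  then have "L_eq (u L) (u L')" using R_eq_st[of "v L" "v L'"] unfolding v_def by simp
  then have "Lcl (u L) = Lcl (u L')" by (rule Lcl_cong)
  then show LL: "L = L'" using Lcl_u[OF D L] Lcl_u[OF D' L'] by simp
  have "L_eq (u K) (v L * g * u K)" using p(2) by (rule L_eq_sym)
  moreover have "L_eq (v L * g * u K) (u K')" unfolding eq by (rule p'(2))
  ultimately have "L_eq (u K) (u K')" by (rule L_eq_trans)
  then have "Lcl (u K) = Lcl (u K')" by (rule Lcl_cong)
  then show KK: "K = K'" using Lcl_u[OF D K] Lcl_u[OF D' K'] by simp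
  have "g = pq D L * (v L * g * u K) * pp D K" using p(4) by simp
  also have "\<dots> = pq D' L' * (v L' * g' * u K') * pp D' K'" using eq DD LL KK by simp
  also have "\<dots> = g'" by (rule p'(4))
  finally show "g = g'" .
qed

lemma dec_exist:
  "\<exists>D L K g. D \<in> Dclasses \<and> L \<in> Lclasses_in D \<and> K \<in> Lclasses_in D \<and> g \<in> G D \<and> z = v L * g * u K"
proof -
  define D where "D = Dcl z"
  have D: "D \<in> Dclasses" unfolding D_def by (rule Dcl_in)
  have zD: "z \<in> D" unfolding D_def by (rule Dcl_self)
  have "D_eq (one D) z" using zD D_mem[OF D] by blast
  then have "D_eq (st (one D)) (st z)" by (rule D_eq_st)
  then have szD: "st z \<in> D" using D_mem[OF D] D by simp
  define K where "K = Lcl z"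
  define L where "L = Lcl (st z)"
  have K: "K \<in> Lclasses_in D" unfolding K_def by (rule Lcl_in[OF D zD])
  have L: "L \<in> Lclasses_in D" unfolding L_def by (rule Lcl_in[OF D szD])
  have zu: "L_eq z (u K)" using u_in[OF D K] unfolding K_def Lcl_def by simp
  have "L_eq (st z) (u L)" using u_in[OF D L] unfolding L_def Lcl_def by simp
  then have zv: "R_eq z (v L)" unfolding v_def using L_eq_st[of "st z" "u L"] by simp
  have zpu: "z * pp D K * u K = z"
  proof -
    from zu consider "z = u K" | s where "z = s * u K" unfolding L_eq_def L_le_def by blast
    then show ?thesis
    proof cases
      case 1 then show ?thesis using upu[OF D K] by simp
    next
      case 2 then show ?thesis using upu[OF D K] by (simp add: mult.assoc)
    qed
  qed
  define w where "w = z * pp D K"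
  have "R_eq w (v L)"
  proof -
    have "R_le w z" unfolding w_def by simp
    moreover have "R_le z w" using zpu[symmetric] unfolding w_def R_le_def by blast
    ultimately have "R_eq w z" unfolding R_eq_def by blast
    then show ?thesis using zv R_eq_trans by blast
  qed
  moreover have "L_le (one D) w"
  proof -
    from zu consider "u K = z" | s where "u K = s * z" unfolding L_eq_def L_le_def by blast
    then show ?thesis
    proof cases
      case 1 then have "one D = w" using u_pp[OF D K] unfolding w_def by metis
      then show ?thesis by simp
    next
      case 2 then have "one D = s * w" using u_pp[OF D K] unfolding w_def by (metis mult.assoc)
      then show ?thesis unfolding L_le_def by blast
    qed
  qed
  moreover have "w * one D = w" unfolding w_def using pp_e[OF D K] by (simp add: mult.assoc)
  ultimately have f: "pq D L * w \<in> G D" "v L * (pq D L * w) = w" using factor[OF D L] by auto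
  have "v L * (pq D L * w) * u K = z" using f(2) zpu unfolding w_def by simp
  then have "z = v L * (pq D L * w) * u K" by simp
  then show ?thesis using D L K f(1) by blast
qed

lemma left_factor:
  assumes D: "D \<in> Dclasses" and L: "L \<in> Lclasses_in D" and J: "J_le (v L) (x * v L)"
  shows "Lcl (st (x * v L)) \<in> Lclasses_in D"
    "pq D (Lcl (st (x * v L))) * (x * v L) \<in> G D"
    "v (Lcl (st (x * v L))) * (pq D (Lcl (st (x * v L))) * (x * v L)) = x * v L"
proof -
  define w where "w = x * v L"
  define L' where "L' = Lcl (st w)"
  have wL: "L_eq w (v L)" unfolding w_def using J by (rule stab_L)
  then have we: "L_eq w (one D)" using v_L[OF D L] L_eq_trans by blast
  then have "D_eq (one D) w" using L_eq_D D_eq_sym by blast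
  then have "D_eq (st (one D)) (st w)" by (rule D_eq_st)
  then have swD: "st w \<in> D" using D_mem[OF D] D by simp
  have L': "L' \<in> Lclasses_in D" unfolding L'_def by (rule Lcl_in[OF D swD])
  have "L_eq (st w) (u L')" using u_in[OF D L'] unfolding L'_def Lcl_def by simp
  then have "R_eq w (v L')" unfolding v_def using L_eq_st[of "st w" "u L'"] by simp
  moreover have "L_le (one D) w" using we unfolding L_eq_def by blast
  moreover have "w * one D = w" unfolding w_def using v_e[OF D L] by (simp add: mult.assoc)
  ultimately have "pq D L' * w \<in> G D" "v L' * (pq D L' * w) = w" using factor[OF D L'] by auto
  then show "Lcl (st (x * v L)) \<in> Lclasses_in D"
    "pq D (Lcl (st (x * v L))) * (x * v L) \<in> G D"
    "v (Lcl (st (x * v L))) * (pq D (Lcl (st (x * v L))) * (x * v L)) = x * v L"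
    using L' unfolding w_def L'_def by auto
qed

end

lemma m_if: "(k::'r::comm_ring_1) * (if P then x else 0) = (if P then k * x else 0)" by simp
lemma if_m: "(if P then x else 0) * (k::'r::comm_ring_1) = (if P then x * k else 0)" by simp
lemma if_if0: "(if P then (if Q then x else 0) else 0) = (if P \<and> Q then x else 0)" by simp
lemma sum_delta_conj: "finite A \<Longrightarrow> (\<Sum>x\<in>A. if t = x \<and> P x then f x else 0) = (if t \<in> A \<and> P t then f t else 0)"
proof -
  assume A: "finite A"
  have "(\<Sum>x\<in>A. if t = x \<and> P x then f x else 0) = (\<Sum>x\<in>A. if t = x then (if P t then f t else 0) else 0)"
    by (rule sum.cong) auto
  then show ?thesis using A by (simp add: sum.delta)
qed
lemma if_sum0: "(if P then sum f A else 0) = (\<Sum>x\<in>A. if P then f x else 0)" by simp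

lemma tw_mult_assoc:
  fixes \<alpha> :: "'a::{semigroup_mult,finite} \<Rightarrow> 'a \<Rightarrow> 'r::comm_ring_1"
  assumes "twisting \<alpha>"
  shows "tw_mult \<alpha> (tw_mult \<alpha> a b) c = tw_mult \<alpha> a (tw_mult \<alpha> b c)"
proof (rule ext)
  fix z
  have tw: "\<alpha> p q * \<alpha> (p * q) y = \<alpha> p (q * y) * \<alpha> q y" for p q y
    using assms unfolding twisting_def by blast
  have key: "\<alpha> (p*q) y * \<alpha> p q = \<alpha> p (q*y) * \<alpha> q y" for p q y using tw[of p q y] by (simp add: mult.commute)
  have "tw_mult \<alpha> (tw_mult \<alpha> a b) c z =
    (\<Sum>x\<in>UNIV. \<Sum>y\<in>UNIV. \<Sum>p\<in>UNIV. \<Sum>q\<in>UNIV. if p * q = x \<and> x * y = z then \<alpha> x y * \<alpha> p q * a p * b q * c y else 0)"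
    unfolding tw_mult_def by (simp add: sum_distrib_left sum_distrib_right if_sum0 m_if if_m if_if0 mult_ac conj_commute cong: if_cong)
  also have "\<dots> = (\<Sum>p\<in>UNIV. \<Sum>q\<in>UNIV. \<Sum>y\<in>UNIV. \<Sum>x\<in>UNIV. if p * q = x \<and> x * y = z then \<alpha> x y * \<alpha> p q * a p * b q * c y else 0)"
    by (subst sum.swap, subst (2) sum.swap, subst (3) sum.swap, subst sum.swap, subst (2) sum.swap, rule refl)
  also have "\<dots> = (\<Sum>p\<in>UNIV. \<Sum>q\<in>UNIV. \<Sum>y\<in>UNIV. if p * q * y = z then \<alpha> (p*q) y * \<alpha> p q * a p * b q * c y else 0)"
    by (simp add: sum_delta_conj)
  finally have L: "tw_mult \<alpha> (tw_mult \<alpha> a b) c z = \<dots>" .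
  have "tw_mult \<alpha> a (tw_mult \<alpha> b c) z =
    (\<Sum>p\<in>UNIV. \<Sum>w\<in>UNIV. \<Sum>q\<in>UNIV. \<Sum>y\<in>UNIV. if q * y = w \<and> p * w = z then \<alpha> p w * \<alpha> q y * a p * b q * c y else 0)"
    unfolding tw_mult_def by (simp add: sum_distrib_left sum_distrib_right if_sum0 m_if if_m if_if0 mult_ac conj_commute cong: if_cong)
  also have "\<dots> = (\<Sum>p\<in>UNIV. \<Sum>q\<in>UNIV. \<Sum>y\<in>UNIV. \<Sum>w\<in>UNIV. if q * y = w \<and> p * w = z then \<alpha> p w * \<alpha> q y * a p * b q * c y else 0)"
    by (rule sum.cong[OF refl], subst sum.swap, rule sum.cong[OF refl], subst sum.swap, rule refl)
  also have "\<dots> = (\<Sum>p\<in>UNIV. \<Sum>q\<in>UNIV. \<Sum>y\<in>UNIV. if p * (q * y) = z then \<alpha> p (q*y) * \<alpha> q y * a p * b q * c y else 0)"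
    by (simp add: sum_delta_conj)
  finally show "tw_mult \<alpha> (tw_mult \<alpha> a b) c z = tw_mult \<alpha> a (tw_mult \<alpha> b c) z"
    using L by (simp only:) (intro sum.cong refl, simp only: key mult.assoc)
qed

lemma tw_mult_lin1:
  "tw_mult \<alpha> (\<lambda>x. k * a x + b x) c = (\<lambda>x. k * tw_mult \<alpha> a c x + tw_mult \<alpha> b c x)"
proof -
  have "\<And>x y z. (if x*y = z then \<alpha> x y * (k * a x + b x) * c y else 0) = k * (if x*y=z then \<alpha> x y * a x * c y else 0) + (if x*y=z then \<alpha> x y * b x * c y else 0)"
    by (simp add: algebra_simps)
  then show ?thesis unfolding tw_mult_def by (simp add: sum.distrib sum_distrib_left)
qed

lemma tw_mult_lin2:
  "tw_mult \<alpha> c (\<lambda>x. k * a x + b x) = (\<lambda>x. k * tw_mult \<alpha> c a x + tw_mult \<alpha> c b x)"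
proof -
  have "\<And>x y z. (if x*y = z then \<alpha> x y * c x * (k * a y + b y) else 0) = k * (if x*y=z then \<alpha> x y * c x * a y else 0) + (if x*y=z then \<alpha> x y * c x * b y else 0)"
    by (simp add: algebra_simps)
  then show ?thesis unfolding tw_mult_def by (simp add: sum.distrib sum_distrib_left)
qed

lemma is_R_alg: assumes "twisting \<alpha>" shows "is_R_algebra UNIV (tw_mult \<alpha>)"
  unfolding is_R_algebra_def in_alg_def using tw_mult_assoc[OF assms] tw_mult_lin1 tw_mult_lin2 by blast

context inv begin

lemma sum_st: "(\<Sum>x\<in>UNIV. f x) = (\<Sum>x\<in>UNIV. f (st x))"
proof -
  have "inj st" by (metis injI st_inj)
  moreover have "st ` UNIV = UNIV" by (metis st_st surj_def)
  ultimately show ?thesis by (metis sum.reindex comp_apply sum.cong)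
qed

lemma anti_inv:
  assumes tst: "\<forall>x y. \<alpha> x y = \<alpha> (st y) (st x)"
  shows "alg_anti_involution UNIV (tw_mult \<alpha>) (lin_star st)"
  unfolding alg_anti_involution_def in_alg_def
proof (intro conjI allI impI)
  fix a :: "'a \<Rightarrow> 'b" show "lin_star st (lin_star st a) = a" unfolding lin_star_def by simp
next
  fix a b :: "'a \<Rightarrow> 'b" and k
  show "lin_star st (\<lambda>x. k * a x + b x) = (\<lambda>x. k * lin_star st a x + lin_star st b x)"
    unfolding lin_star_def by simp
next
  fix a b :: "'a \<Rightarrow> 'b"
  show "lin_star st (tw_mult \<alpha> a b) = tw_mult \<alpha> (lin_star st b) (lin_star st a)"
  proof (rule ext)
    fix z
    have "lin_star st (tw_mult \<alpha> a b) z = (\<Sum>x\<in>UNIV. \<Sum>y\<in>UNIV. if x * y = st z then \<alpha> x y * a x * b y else 0)"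
      unfolding lin_star_def tw_mult_def by simp
    also have "\<dots> = (\<Sum>x\<in>UNIV. \<Sum>y\<in>UNIV. if st x * st y = st z then \<alpha> (st x) (st y) * a (st x) * b (st y) else 0)"
      by (subst sum_st, subst (2) sum_st, rule refl)
    also have "\<dots> = (\<Sum>x\<in>UNIV. \<Sum>y\<in>UNIV. if y * x = z then \<alpha> y x * b (st y) * a (st x) else 0)"
    proof (intro sum.cong refl)
      fix x y
      have "st x * st y = st z \<longleftrightarrow> y * x = z" by (metis st_mult st_st)
      moreover have "\<alpha> (st x) (st y) = \<alpha> y x" using tst by metis
      ultimately show "(if st x * st y = st z then \<alpha> (st x) (st y) * a (st x) * b (st y) else 0) = (if y * x = z then \<alpha> y x * b (st y) * a (st x) else 0)"
        by (simp add: mult_ac)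
    qed
    also have "\<dots> = tw_mult \<alpha> (lin_star st b) (lin_star st a) z"
      unfolding lin_star_def tw_mult_def by (subst sum.swap) simp
    finally show "lin_star st (tw_mult \<alpha> a b) z = tw_mult \<alpha> (lin_star st b) (lin_star st a) z" .
  qed
qed simp

end

context cor7 begin

lemma Dle_J:
  fixes D1 D2 D3 :: "'a set"
  assumes "D1 \<in> Dclasses" "D2 \<in> Dclasses" "Dclass_le D1 D2" "x \<in> D1" "y \<in> D2"
  shows "J_le x y"
proof -
  obtain x' y' where xy: "x' \<in> D1" "y' \<in> D2" "J_le x' y'" using assms(3) unfolding Dclass_le_def by blast
  have "D_eq (one D1) x" "D_eq (one D1) x'" using assms(1,4) xy(1) D_mem by blast+
  then have "D_eq x x'" using D_eq_sym D_eq_trans by blast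
  then have "J_le x x'" using D_eq_J by blast
  moreover have "D_eq (one D2) y" "D_eq (one D2) y'" using assms(2,5) xy(2) D_mem by blast+
  then have "D_eq y' y" using D_eq_sym D_eq_trans by blast
  then have "J_le y' y" using D_eq_J by blast
  ultimately show ?thesis using xy(3) J_le_trans by blast
qed

lemma Dle_antisym:
  fixes D1 D2 D3 :: "'a set"
  assumes "D1 \<in> Dclasses" "D2 \<in> Dclasses" "Dclass_le D1 D2" "Dclass_le D2 D1"
  shows "D1 = D2"
proof -
  have "J_le (one D1) (one D2)" "J_le (one D2) (one D1)"
    using Dle_J assms one_in by blast+
  then have "D_eq (one D1) (one D2)" by (rule J_D)
  then have "Dcl (one D1) = Dcl (one D2)" using Dcl_eq_iff by blast
  then show ?thesis using Dcl_eq[OF assms(1) one_in[OF assms(1)]] Dcl_eq[OF assms(2) one_in[OF assms(2)]] by simp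
qed

lemma Dle_trans:
  fixes D1 D2 D3 :: "'a set"
  assumes "D1 \<in> Dclasses" "D2 \<in> Dclasses" "D3 \<in> Dclasses" "Dclass_le D1 D2" "Dclass_le D2 D3"
  shows "Dclass_le D1 D3"
proof -
  have "J_le (one D1) (one D2)" "J_le (one D2) (one D3)" using Dle_J assms one_in by blast+
  then have "J_le (one D1) (one D3)" by (rule J_le_trans)
  then show ?thesis unfolding Dclass_le_def using one_in assms by blast
qed

lemma Dless_trans:
  fixes D1 D2 D3 :: "'a set"
  assumes "D1 \<in> Dclasses" "D2 \<in> Dclasses" "D3 \<in> Dclasses" "Dclass_less D1 D2" "Dclass_less D2 D3"
  shows "Dclass_less D1 D3"
proof -
  have "Dclass_le D1 D3" using Dle_trans assms unfolding Dclass_less_def by blast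
  moreover have "D1 \<noteq> D3"
  proof
    assume "D1 = D3"
    then have "Dclass_le D2 D1" using assms(5) unfolding Dclass_less_def by simp
    then have "D1 = D2" using Dle_antisym assms unfolding Dclass_less_def by blast
    then show False using assms(4) unfolding Dclass_less_def by simp
  qed
  ultimately show ?thesis unfolding Dclass_less_def by blast
qed

lemma Dless_asym:
  fixes D1 D2 D3 :: "'a set"
  assumes "D1 \<in> Dclasses" "D2 \<in> Dclasses" "Dclass_less D1 D2" "Dclass_less D2 D1"
  shows False
  using Dle_antisym assms unfolding Dclass_less_def by blast

lemma cellG: "D \<in> Dclasses \<Longrightarrow> cellular_algebra (G D) (tw_mult (\<lambda>_ _. 1)) (lin_star st) (\<Lambda>D D) (leD D) (MD D) (CD D)"
  using cell unfolding G_def by blast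

lemma finG: assumes D: "D \<in> Dclasses" shows "finite (G D)"
  using cellG[OF D] unfolding cellular_algebra_def by (elim conjE) assumption
lemma finL: assumes D: "D \<in> Dclasses" shows "finite (\<Lambda>D D)"
  using cellG[OF D] unfolding cellular_algebra_def by (elim conjE) assumption
lemma finM': assumes D: "D \<in> Dclasses" shows "\<forall>l\<in>\<Lambda>D D. finite (MD D l)"
  using cellG[OF D] unfolding cellular_algebra_def by (elim conjE) assumption
lemma finM: "D \<in> Dclasses \<Longrightarrow> l \<in> \<Lambda>D D \<Longrightarrow> finite (MD D l)" using finM' by blast
lemma leD_refl': assumes D: "D \<in> Dclasses" shows "\<forall>a\<in>\<Lambda>D D. leD D a a"
  using cellG[OF D] unfolding cellular_algebra_def by (elim conjE) assumption
lemma leD_refl: "D \<in> Dclasses \<Longrightarrow> l \<in> \<Lambda>D D \<Longrightarrow> leD D l l" using leD_refl' by blast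
lemma leD_antisym': assumes D: "D \<in> Dclasses" shows "\<forall>a\<in>\<Lambda>D D. \<forall>b\<in>\<Lambda>D D. leD D a b \<and> leD D b a \<longrightarrow> a = b"
  using cellG[OF D] unfolding cellular_algebra_def by (elim conjE) assumption
lemma leD_antisym: "D \<in> Dclasses \<Longrightarrow> a \<in> \<Lambda>D D \<Longrightarrow> b \<in> \<Lambda>D D \<Longrightarrow> leD D a b \<Longrightarrow> leD D b a \<Longrightarrow> a = b"
  using leD_antisym' by blast
lemma leD_trans': assumes D: "D \<in> Dclasses" shows "\<forall>a\<in>\<Lambda>D D. \<forall>b\<in>\<Lambda>D D. \<forall>c\<in>\<Lambda>D D. leD D a b \<and> leD D b c \<longrightarrow> leD D a c"
  using cellG[OF D] unfolding cellular_algebra_def by (elim conjE) assumption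
lemma leD_trans: "D \<in> Dclasses \<Longrightarrow> a \<in> \<Lambda>D D \<Longrightarrow> b \<in> \<Lambda>D D \<Longrightarrow> c \<in> \<Lambda>D D \<Longrightarrow> leD D a b \<Longrightarrow> leD D b c \<Longrightarrow> leD D a c"
  using leD_trans' by blast
lemma CD_supp': assumes D: "D \<in> Dclasses" shows "\<forall>l\<in>\<Lambda>D D. \<forall>s\<in>MD D l. \<forall>t\<in>MD D l. in_alg (G D) (CD D l s t)"
  using cellG[OF D] unfolding cellular_algebra_def by (elim conjE) assumption
lemma CD_supp: "D \<in> Dclasses \<Longrightarrow> l \<in> \<Lambda>D D \<Longrightarrow> s \<in> MD D l \<Longrightarrow> t \<in> MD D l \<Longrightarrow> g \<notin> G D \<Longrightarrow> CD D l s t g = 0"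
  using CD_supp' unfolding in_alg_def by blast
lemma CD_basis': assumes D: "D \<in> Dclasses" shows "\<forall>f. in_alg (G D) f \<longrightarrow>
  (\<exists>!r. (\<forall>i. i \<notin> cell_index (\<Lambda>D D) (MD D) \<longrightarrow> r i = 0) \<and>
      f = (\<lambda>x. \<Sum>i\<in>cell_index (\<Lambda>D D) (MD D). r i * CD D (fst i) (fst (snd i)) (snd (snd i)) x))"
  using cellG[OF D] unfolding cellular_algebra_def by (elim conjE) assumption
lemma CD_st': assumes D: "D \<in> Dclasses" shows "\<forall>l\<in>\<Lambda>D D. \<forall>s\<in>MD D l. \<forall>t\<in>MD D l. lin_star st (CD D l s t) = CD D l t s"
  using cellG[OF D] unfolding cellular_algebra_def by (elim conjE) assumption
lemma CD_st: "D \<in> Dclasses \<Longrightarrow> l \<in> \<Lambda>D D \<Longrightarrow> s \<in> MD D l \<Longrightarrow> t \<in> MD D l \<Longrightarrow> lin_star st (CD D l s t) = CD D l t s"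
  using CD_st' by blast
lemma CD_C3': assumes D: "D \<in> Dclasses" shows "\<forall>l\<in>\<Lambda>D D. \<forall>s\<in>MD D l. \<forall>a. in_alg (G D) a \<longrightarrow>
        (\<exists>r. \<forall>t\<in>MD D l. (\<lambda>x. tw_mult (\<lambda>_ _. 1) a (CD D l s t) x - (\<Sum>s'\<in>MD D l. r s' * CD D l s' t x))
                        \<in> lower_span (\<Lambda>D D) (leD D) (MD D) (CD D) l)"
  using cellG[OF D] unfolding cellular_algebra_def by (elim conjE) assumption

end

context cor7 begin

definition "IG D = cell_index (\<Lambda>D D) (MD D)"
definition "II = cell_index (cor_Lambda \<Lambda>D) (cor_M MD)"
definition "CC i = cor_C st one u CD (fst i) (fst (snd i)) (snd (snd i))"
definition "emb D L K j = ((D, fst j), (L, fst (snd j)), (K, snd (snd j)))"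

lemma II_mem: "((D,l),(L,s),(K,t)) \<in> II \<longleftrightarrow>
   D \<in> Dclasses \<and> l \<in> \<Lambda>D D \<and> L \<in> Lclasses_in D \<and> s \<in> MD D l \<and> K \<in> Lclasses_in D \<and> t \<in> MD D l"
  unfolding II_def cell_index_def cor_Lambda_def cor_M_def by auto

lemma IG_mem: "(l,s,t) \<in> IG D \<longleftrightarrow> l \<in> \<Lambda>D D \<and> s \<in> MD D l \<and> t \<in> MD D l"
  unfolding IG_def cell_index_def by auto

lemma tup: obtains D l L s K t where "i = ((D,l),(L,s),(K,t))"
  by (metis prod.collapse)

lemma finite_Dclasses: "finite (Dclasses :: 'a set set)" by simp

lemma finite_Lcl: fixes D :: "'a set" shows "finite (Lclasses_in D)" unfolding Lclasses_in_def by simp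

lemma finite_II: "finite II"
proof -
  have "finite (cor_Lambda \<Lambda>D)" unfolding cor_Lambda_def
    by (rule finite_SigmaI) (auto intro: finL)
  moreover have "\<forall>p\<in>cor_Lambda \<Lambda>D. finite (cor_M MD p)"
    unfolding cor_Lambda_def cor_M_def using finM finite_Lcl by auto
  ultimately show ?thesis unfolding II_def cell_index_def by (intro finite_SigmaI) auto
qed

lemma finite_IG: "D \<in> Dclasses \<Longrightarrow> finite (IG D)"
  unfolding IG_def cell_index_def by (intro finite_SigmaI finL) (auto intro: finM)

lemma C_eval:
  assumes D: "D \<in> Dclasses" and L: "L \<in> Lclasses_in D" and K: "K \<in> Lclasses_in D" and g: "g \<in> G D"
    and i: "((D',l),(L',s),(K',t)) \<in> II"
  shows "cor_C st one u CD (D',l) (L',s) (K',t) (v L * g * u K) = (if D' = D \<and> L' = L \<and> K' = K then CD D l s t g else 0)"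
proof -
  have D': "D' \<in> Dclasses" "L' \<in> Lclasses_in D'" "K' \<in> Lclasses_in D'" using i II_mem by auto
  have eqv: "(v L' * g' * u K' = v L * g * u K) \<longleftrightarrow> (g = g' \<and> (D' = D \<and> L' = L \<and> K' = K))" if g': "g' \<in> G D'" for g'
  proof
    assume "v L' * g' * u K' = v L * g * u K"
    then show "g = g' \<and> (D' = D \<and> L' = L \<and> K' = K)" using dec_uniq[OF D L K g D'(1,2,3) g'] by metis
  qed auto
  have "cor_C st one u CD (D',l) (L',s) (K',t) (v L * g * u K) =
      (\<Sum>g'\<in>G D'. if v L' * g' * u K' = v L * g * u K then CD D' l s t g' else 0)"
    unfolding cor_C_def G_def v_def fst_conv snd_conv by (rule refl)
  also have "\<dots> = (\<Sum>g'\<in>G D'. if g = g' \<and> (D' = D \<and> L' = L \<and> K' = K) then CD D' l s t g' else 0)"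
    by (rule sum.cong) (auto simp: eqv)
  also have "\<dots> = (if g \<in> G D' \<and> (D' = D \<and> L' = L \<and> K' = K) then CD D' l s t g else 0)"
    by (rule sum_delta_conj[OF finG[OF D'(1)]])
  also have "\<dots> = (if D' = D \<and> L' = L \<and> K' = K then CD D l s t g else 0)" using g by auto
  finally show ?thesis .
qed

lemma CC_eval:
  assumes D: "D \<in> Dclasses" and L: "L \<in> Lclasses_in D" and K: "K \<in> Lclasses_in D" and g: "g \<in> G D"
    and i: "i \<in> II"
  shows "CC i (v L * g * u K) = (if fst (fst i) = D \<and> fst (fst (snd i)) = L \<and> fst (snd (snd i)) = K
      then CD D (snd (fst i)) (snd (fst (snd i))) (snd (snd (snd i))) g else 0)"
proof -
  obtain D' l L' s K' t where ii: "i = ((D',l),(L',s),(K',t))" by (rule tup)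
  show ?thesis using C_eval[OF D L K g i[unfolded ii]] unfolding ii CC_def by simp
qed

lemma emb_II: "D \<in> Dclasses \<Longrightarrow> L \<in> Lclasses_in D \<Longrightarrow> K \<in> Lclasses_in D \<Longrightarrow> j \<in> IG D \<Longrightarrow> emb D L K j \<in> II"
  by (cases j) (auto simp: emb_def II_mem IG_mem)

lemma inj_emb: "inj (emb D L K)"
  unfolding emb_def by (rule injI) (auto simp: prod_eq_iff)

lemma eval:
  assumes D: "D \<in> Dclasses" and L: "L \<in> Lclasses_in D" and K: "K \<in> Lclasses_in D" and g: "g \<in> G D"
  shows "(\<Sum>i\<in>II. r i * CC i (v L * g * u K)) =
         (\<Sum>j\<in>IG D. r (emb D L K j) * CD D (fst j) (fst (snd j)) (snd (snd j)) g)"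
proof -
  let ?z = "v L * g * u K"
  have sub: "emb D L K ` IG D \<subseteq> II" using emb_II[OF D L K] by blast
  have "(\<Sum>i\<in>II. r i * CC i ?z) = (\<Sum>i\<in>emb D L K ` IG D. r i * CC i ?z)"
  proof (rule sum.mono_neutral_right[OF finite_II sub])
    show "\<forall>i\<in>II - emb D L K ` IG D. r i * CC i ?z = 0"
    proof
      fix i assume i: "i \<in> II - emb D L K ` IG D"
      obtain D' l L' s K' t where ii: "i = ((D',l),(L',s),(K',t))" by (rule tup)
      have "\<not> (D' = D \<and> L' = L \<and> K' = K)"
      proof
        assume h: "D' = D \<and> L' = L \<and> K' = K"
        then have "(l,s,t) \<in> IG D" using i ii by (auto simp: II_mem IG_mem)
        moreover have "i = emb D L K (l,s,t)" using ii h by (simp add: emb_def)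
        ultimately show False using i by blast
      qed
      then show "r i * CC i ?z = 0" using CC_eval[OF D L K g, of i] i ii by auto
    qed
  qed
  also have "\<dots> = (\<Sum>j\<in>IG D. r (emb D L K j) * CC (emb D L K j) ?z)"
    by (rule sum.reindex[OF inj_on_subset[OF inj_emb subset_UNIV], unfolded comp_def])
  also have "\<dots> = (\<Sum>j\<in>IG D. r (emb D L K j) * CD D (fst j) (fst (snd j)) (snd (snd j)) g)"
  proof (rule sum.cong[OF refl])
    fix j assume j: "j \<in> IG D"
    show "r (emb D L K j) * CC (emb D L K j) ?z = r (emb D L K j) * CD D (fst j) (fst (snd j)) (snd (snd j)) g"
      using CC_eval[OF D L K g emb_II[OF D L K j]] by (simp add: emb_def)
  qed
  finally show ?thesis .
qed

end

context cor7 begin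

definition "grc D \<phi> = (THE r. (\<forall>j. j \<notin> IG D \<longrightarrow> r j = 0) \<and>
    \<phi> = (\<lambda>x. \<Sum>j\<in>IG D. r j * CD D (fst j) (fst (snd j)) (snd (snd j)) x))"
definition "pull D L K f = (\<lambda>g. if g \<in> G D then f (v L * g * u K) else 0)"
definition "coef f i = (if i \<in> II then grc (fst (fst i)) (pull (fst (fst i)) (fst (fst (snd i))) (fst (snd (snd i))) f)
     (snd (fst i), snd (fst (snd i)), snd (snd (snd i))) else 0)"

lemma grc:
  assumes D: "D \<in> Dclasses" and phi: "in_alg (G D) \<phi>"
  shows "(\<forall>j. j \<notin> IG D \<longrightarrow> grc D \<phi> j = 0) \<and> \<phi> = (\<lambda>x. \<Sum>j\<in>IG D. grc D \<phi> j * CD D (fst j) (fst (snd j)) (snd (snd j)) x)"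
proof -
  have "\<exists>!r. (\<forall>j. j \<notin> IG D \<longrightarrow> r j = 0) \<and> \<phi> = (\<lambda>x. \<Sum>j\<in>IG D. r j * CD D (fst j) (fst (snd j)) (snd (snd j)) x)"
    using CD_basis'[OF D] phi unfolding IG_def by blast
  then show ?thesis unfolding grc_def by (rule theI')
qed

lemma grc_uniq:
  assumes D: "D \<in> Dclasses" and phi: "in_alg (G D) \<phi>"
    and r: "\<forall>j. j \<notin> IG D \<longrightarrow> r j = 0" "\<phi> = (\<lambda>x. \<Sum>j\<in>IG D. r j * CD D (fst j) (fst (snd j)) (snd (snd j)) x)"
  shows "r = grc D \<phi>"
proof -
  have "\<exists>!r. (\<forall>j. j \<notin> IG D \<longrightarrow> r j = 0) \<and> \<phi> = (\<lambda>x. \<Sum>j\<in>IG D. r j * CD D (fst j) (fst (snd j)) (snd (snd j)) x)"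
    using CD_basis'[OF D] phi unfolding IG_def by blast
  then show ?thesis unfolding grc_def using r by (intro the1_equality[symmetric]) auto
qed

lemma pull_alg: "in_alg (G D) (pull D L K f)" unfolding in_alg_def pull_def by simp

lemma coef_emb:
  assumes D: "D \<in> Dclasses" and L: "L \<in> Lclasses_in D" and K: "K \<in> Lclasses_in D" and j: "j \<in> IG D"
  shows "coef f (emb D L K j) = grc D (pull D L K f) j"
  using emb_II[OF D L K j] unfolding coef_def by (simp add: emb_def)

lemma expand: "f = (\<lambda>z. \<Sum>i\<in>II. coef f i * CC i z)"
proof (rule ext)
  fix z
  obtain D L K g where dec: "D \<in> Dclasses" "L \<in> Lclasses_in D" "K \<in> Lclasses_in D" "g \<in> G D" "z = v L * g * u K"
    using dec_exist by blast
  have "(\<Sum>i\<in>II. coef f i * CC i z) = (\<Sum>j\<in>IG D. coef f (emb D L K j) * CD D (fst j) (fst (snd j)) (snd (snd j)) g)"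
    unfolding dec(5) by (rule eval[OF dec(1-4)])
  also have "\<dots> = (\<Sum>j\<in>IG D. grc D (pull D L K f) j * CD D (fst j) (fst (snd j)) (snd (snd j)) g)"
    using coef_emb[OF dec(1-3)] by simp
  also have "\<dots> = pull D L K f g"
    using fun_cong[OF conjunct2[OF grc[OF dec(1) pull_alg]], where x=g] by simp
  also have "\<dots> = f z" unfolding pull_def dec(5) using dec(4) by simp
  finally show "f z = (\<Sum>i\<in>II. coef f i * CC i z)" by simp
qed

lemma coef_out: "i \<notin> II \<Longrightarrow> coef f i = 0" unfolding coef_def by simp

lemma uniq:
  assumes r: "\<forall>i. i \<notin> II \<longrightarrow> r i = 0" and f: "f = (\<lambda>z. \<Sum>i\<in>II. r i * CC i z)"
  shows "r = coef f"
proof (rule ext)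
  fix i
  show "r i = coef f i"
  proof (cases "i \<in> II")
    case False then show ?thesis using r[rule_format, OF False] coef_out[OF False] by simp
  next
    case True
    obtain D l L s K t where ii: "i = ((D,l),(L,s),(K,t))" by (rule tup)
    have D: "D \<in> Dclasses" and L: "L \<in> Lclasses_in D" and K: "K \<in> Lclasses_in D" and j: "(l,s,t) \<in> IG D"
      using True ii by (auto simp: II_mem IG_mem)
    have iemb: "i = emb D L K (l,s,t)" using ii by (simp add: emb_def)
    define r' where "r' = (\<lambda>j. if j \<in> IG D then r (emb D L K j) else 0)"
    have "pull D L K f = (\<lambda>x. \<Sum>j\<in>IG D. r' j * CD D (fst j) (fst (snd j)) (snd (snd j)) x)"
    proof (rule ext)
      fix x
      show "pull D L K f x = (\<Sum>j\<in>IG D. r' j * CD D (fst j) (fst (snd j)) (snd (snd j)) x)"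
      proof (cases "x \<in> G D")
        case True
        have "pull D L K f x = (\<Sum>i\<in>II. r i * CC i (v L * x * u K))" unfolding pull_def using True f by simp
        also have "\<dots> = (\<Sum>j\<in>IG D. r (emb D L K j) * CD D (fst j) (fst (snd j)) (snd (snd j)) x)"
          by (rule eval[OF D L K True])
        also have "\<dots> = (\<Sum>j\<in>IG D. r' j * CD D (fst j) (fst (snd j)) (snd (snd j)) x)"
          unfolding r'_def by (rule sum.cong) auto
        finally show ?thesis .
      next
        case False
        have "(\<Sum>j\<in>IG D. r' j * CD D (fst j) (fst (snd j)) (snd (snd j)) x) = 0"
        proof (rule sum.neutral, rule ballI)
          fix j assume "j \<in> IG D"
          then show "r' j * CD D (fst j) (fst (snd j)) (snd (snd j)) x = 0"
            using CD_supp[OF D _ _ _ False] by (cases j) (auto simp: IG_mem)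
        qed
        then show ?thesis unfolding pull_def using False by simp
      qed
    qed
    then have "r' = grc D (pull D L K f)"
      by (intro grc_uniq[OF D pull_alg]) (auto simp: r'_def)
    then have "r' (l,s,t) = coef f (emb D L K (l,s,t))" using coef_emb[OF D L K j] by simp
    then show ?thesis using iemb j unfolding r'_def by simp
  qed
qed

lemma basis: "\<exists>!r. (\<forall>i. i \<notin> II \<longrightarrow> r i = 0) \<and> f = (\<lambda>x. \<Sum>i\<in>II. r i * CC i x)"
proof (rule ex1I)
  show "(\<forall>i. i \<notin> II \<longrightarrow> coef f i = 0) \<and> f = (\<lambda>x. \<Sum>i\<in>II. coef f i * CC i x)"
    using coef_out expand by blast
next
  fix r assume "(\<forall>i. i \<notin> II \<longrightarrow> r i = 0) \<and> f = (\<lambda>x. \<Sum>i\<in>II. r i * CC i x)"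
  then show "r = coef f" using uniq by blast
qed

lemma coef_zero:
  assumes i: "i \<in> II" and f: "\<forall>z\<in>fst (fst i). f z = 0"
  shows "coef f i = 0"
proof -
  obtain D l L s K t where ii: "i = ((D,l),(L,s),(K,t))" by (rule tup)
  have D: "D \<in> Dclasses" and L: "L \<in> Lclasses_in D" and K: "K \<in> Lclasses_in D"
    using i ii by (auto simp: II_mem)
  have p0: "pull D L K f = (\<lambda>_. 0)"
    unfolding pull_def using f ii dec_props(3)[OF D L K] by (auto intro!: ext)
  have "(\<lambda>_. 0) = grc D (pull D L K f)"
    by (rule grc_uniq[OF D pull_alg]) (auto simp: p0)
  then show ?thesis unfolding coef_def using i ii by (simp add: fun_eq_iff)
qed

end

lemma LS_comb:
  assumes "\<forall>x\<in>A. F x \<in> lower_span \<Lambda> le M C l"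
  shows "(\<lambda>z. \<Sum>x\<in>A. a x * F x z) \<in> lower_span \<Lambda> le M C l"
proof -
  let ?S = "{i\<in>cell_index \<Lambda> M. le (fst i) l \<and> fst i \<noteq> l}"
  have "\<forall>x\<in>A. \<exists>c. F x = (\<lambda>z. \<Sum>i\<in>?S. c i * C (fst i) (fst (snd i)) (snd (snd i)) z)"
    using assms unfolding lower_span_def by blast
  then obtain c where c: "\<forall>x\<in>A. F x = (\<lambda>z. \<Sum>i\<in>?S. c x i * C (fst i) (fst (snd i)) (snd (snd i)) z)"
    by (rule bchoice_iff[THEN iffD1, elim_format]) blast
  have "(\<lambda>z. \<Sum>x\<in>A. a x * F x z) = (\<lambda>z. \<Sum>x\<in>A. a x * (\<Sum>i\<in>?S. c x i * C (fst i) (fst (snd i)) (snd (snd i)) z))"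
    using c by (intro ext sum.cong) auto
  also have "\<dots> = (\<lambda>z. \<Sum>i\<in>?S. (\<Sum>x\<in>A. a x * c x i) * C (fst i) (fst (snd i)) (snd (snd i)) z)"
    by (rule ext, simp add: sum_distrib_left sum_distrib_right mult.assoc, rule sum.swap)
  finally have eq: "(\<lambda>z. \<Sum>x\<in>A. a x * F x z) = (\<lambda>z. \<Sum>i\<in>?S. (\<Sum>x\<in>A. a x * c x i) * C (fst i) (fst (snd i)) (snd (snd i)) z)" .
  show ?thesis unfolding lower_span_def by (rule CollectI, rule exI, rule eq)
qed

context cor7 begin

abbreviation "LSc l \<equiv> lower_span (cor_Lambda \<Lambda>D) (cor_le leD) (cor_M MD) (cor_C st one u CD) l"
definition "Slow l = {i\<in>II. cor_le leD (fst i) l \<and> fst i \<noteq> l}"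

lemma LSc_I:
  assumes T: "T \<subseteq> Slow l" and f: "f = (\<lambda>x. \<Sum>i\<in>T. d i * CC i x)"
  shows "f \<in> LSc l"
proof -
  have fin: "finite (Slow l)" using finite_II unfolding Slow_def by simp
  have eq: "f = (\<lambda>x. \<Sum>i\<in>Slow l. (if i \<in> T then d i else 0) * CC i x)"
  proof (rule ext)
    fix x
    have "(\<Sum>i\<in>Slow l. (if i \<in> T then d i else 0) * CC i x) = (\<Sum>i\<in>T. (if i \<in> T then d i else 0) * CC i x)"
      by (rule sum.mono_neutral_right[OF fin T]) auto
    then show "f x = (\<Sum>i\<in>Slow l. (if i \<in> T then d i else 0) * CC i x)" using f by simp
  qed
  show ?thesis unfolding lower_span_def by (rule CollectI, rule exI, rule eq[unfolded Slow_def II_def CC_def])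
qed

lemma low_vanish:
  assumes D: "D \<in> Dclasses" and f: "\<forall>z. f z \<noteq> 0 \<longrightarrow> Dclass_less (Dcl z) D"
  shows "f \<in> LSc (D,l)"
proof -
  have fin: "finite (Slow (D,l))" using finite_II unfolding Slow_def by simp
  have sub: "Slow (D,l) \<subseteq> II" unfolding Slow_def by blast
  have z: "coef f i = 0" if i: "i \<in> II - Slow (D,l)" for i
  proof (rule coef_zero)
    show "i \<in> II" using i by blast
    obtain D' l' L s K t where ii: "i = ((D',l'),(L,s),(K,t))" by (rule tup)
    have D': "D' \<in> Dclasses" using i ii II_mem by blast
    have nl: "\<not> Dclass_less D' D"
    proof
      assume h: "Dclass_less D' D"
      then have "D' \<noteq> D" unfolding Dclass_less_def by blast
      then have "i \<in> Slow (D,l)" using i ii h unfolding Slow_def cor_le_def by auto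
      then show False using i by blast
    qed
    show "\<forall>z\<in>fst (fst i). f z = 0"
    proof
      fix z assume "z \<in> fst (fst i)"
      then have "Dcl z = D'" using Dcl_eq[OF D'] ii by simp
      then show "f z = 0" using f nl by metis
    qed
  qed
  have "f = (\<lambda>x. \<Sum>i\<in>II. coef f i * CC i x)" by (rule expand)
  also have "\<dots> = (\<lambda>x. \<Sum>i\<in>Slow (D,l). coef f i * CC i x)"
    by (rule ext, rule sum.mono_neutral_right[OF finite_II sub]) (auto simp: z)
  finally show ?thesis by (intro LSc_I[of "Slow (D,l)"]) auto
qed

lemma C2:
  assumes D: "D \<in> Dclasses" and l: "l \<in> \<Lambda>D D" and L: "L \<in> Lclasses_in D" and K: "K \<in> Lclasses_in D"
    and s: "s \<in> MD D l" and t: "t \<in> MD D l"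
  shows "lin_star st (cor_C st one u CD (D,l) (L,s) (K,t)) = cor_C st one u CD (D,l) (K,t) (L,s)"
proof (rule ext)
  fix z
  have "lin_star st (cor_C st one u CD (D,l) (L,s) (K,t)) z = (\<Sum>g\<in>G D. if v L * g * u K = st z then CD D l s t g else 0)"
    unfolding lin_star_def cor_C_def G_def v_def fst_conv snd_conv by (rule refl)
  also have "\<dots> = (\<Sum>g\<in>G D. if v K * st g * u L = z then CD D l s t g else 0)"
  proof (rule sum.cong[OF refl])
    fix g
    have "v L * g * u K = st z \<longleftrightarrow> v K * st g * u L = z"
      unfolding v_def by (metis st_st st_mult mult.assoc)
    then show "(if v L * g * u K = st z then CD D l s t g else 0) = (if v K * st g * u L = z then CD D l s t g else 0)"
      by simp
  qed
  also have "\<dots> = (\<Sum>h\<in>G D. if v K * h * u L = z then CD D l s t (st h) else 0)"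
    by (rule sum.reindex_bij_witness[of _ st st]) (auto simp: G_st[OF D])
  also have "\<dots> = (\<Sum>h\<in>G D. if v K * h * u L = z then CD D l t s h else 0)"
  proof -
    have cd: "CD D l s t (st h) = CD D l t s h" for h using CD_st[OF D l s t] unfolding lin_star_def by metis
    show ?thesis by (simp add: cd cong: if_cong)
  qed
  also have "\<dots> = cor_C st one u CD (D,l) (K,t) (L,s) z"
    unfolding cor_C_def G_def v_def fst_conv snd_conv by (rule refl)
  finally show "lin_star st (cor_C st one u CD (D,l) (L,s) (K,t)) z = cor_C st one u CD (D,l) (K,t) (L,s) z" .
qed

end

lemma tw_delta:
  "tw_mult \<beta> (\<lambda>w. if w = x then 1 else 0) F = (\<lambda>z. \<Sum>y\<in>UNIV. if x * y = z then \<beta> x y * F y else 0)"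
proof (rule ext)
  fix z
  have "\<And>x' y. (if x' * y = z then \<beta> x' y * (if x' = x then 1 else 0) * F y else 0) =
     (if x' = x then (if x * y = z then \<beta> x y * F y else 0) else 0)" by auto
  then have "tw_mult \<beta> (\<lambda>w. if w = x then 1 else 0) F z =
     (\<Sum>x'\<in>UNIV. \<Sum>y\<in>UNIV. if x' = x then (if x * y = z then \<beta> x y * F y else 0) else 0)"
    unfolding tw_mult_def by simp
  also have "\<dots> = (\<Sum>x'\<in>UNIV. if x' = x then (\<Sum>y\<in>UNIV. if x * y = z then \<beta> x y * F y else 0) else 0)"
    by (simp add: if_sum0)
  also have "\<dots> = (\<Sum>y\<in>UNIV. if x * y = z then \<beta> x y * F y else 0)" by simp
  finally show "tw_mult \<beta> (\<lambda>w. if w = x then 1 else 0) F z = (\<Sum>y\<in>UNIV. if x * y = z then \<beta> x y * F y else 0)" .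
qed

lemma tw_expand:
  "tw_mult \<beta> a F z = (\<Sum>x\<in>UNIV. a x * tw_mult \<beta> (\<lambda>w. if w = x then 1 else 0) F z)"
  unfolding tw_delta unfolding tw_mult_def
  by (simp add: sum_distrib_left m_if mult_ac cong: if_cong)

context cor7 begin

definition "push D L K \<phi> = (\<lambda>z. \<Sum>g\<in>G D. if v L * g * u K = z then \<phi> g else 0)"

lemma push_C: "push D L K (CD D l s t) = cor_C st one u CD (D,l) (L,s) (K,t)"
  unfolding push_def cor_C_def G_def v_def fst_conv snd_conv by (rule refl)

lemma push_sum: fixes c :: "'j \<Rightarrow> 'r" shows "push D L K (\<lambda>g. \<Sum>j\<in>J. c j * B j g) z = (\<Sum>j\<in>J. c j * push D L K (B j) z)"
proof -
  have "push D L K (\<lambda>g. \<Sum>j\<in>J. c j * B j g) z = (\<Sum>g\<in>G D. \<Sum>j\<in>J. if v L * g * u K = z then c j * B j g else 0)"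
    unfolding push_def by (simp add: if_sum0)
  also have "\<dots> = (\<Sum>j\<in>J. \<Sum>g\<in>G D. if v L * g * u K = z then c j * B j g else 0)" by (rule sum.swap)
  also have "\<dots> = (\<Sum>j\<in>J. c j * push D L K (B j) z)" unfolding push_def by (simp add: sum_distrib_left m_if)
  finally show ?thesis .
qed

lemma push_diff: fixes A B :: "'a \<Rightarrow> 'r" shows "push D L K (\<lambda>g. A g - B g) z = push D L K A z - push D L K B z"
  unfolding push_def by (subst sum_subtractf[symmetric]) (rule sum.cong, auto)

lemma xC:
  assumes D: "D \<in> Dclasses" and L: "L \<in> Lclasses_in D" and K: "K \<in> Lclasses_in D"
  shows "tw_mult \<alpha> (\<lambda>w. if w = x then 1 else 0) (cor_C st one u CD (D,l) (L,s) (K,t)) =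
     (\<lambda>z. \<alpha> x (v L) * (\<Sum>g\<in>G D. if x * v L * g * u K = z then CD D l s t g else 0))"
proof (rule ext)
  fix z
  have "tw_mult \<alpha> (\<lambda>w. if w = x then 1 else 0) (cor_C st one u CD (D,l) (L,s) (K,t)) z =
     (\<Sum>y\<in>UNIV. if x * y = z then \<alpha> x y * (\<Sum>g\<in>G D. if v L * g * u K = y then CD D l s t g else 0) else 0)"
    unfolding tw_delta cor_C_def G_def v_def fst_conv snd_conv by (rule refl)
  also have "\<dots> = (\<Sum>y\<in>UNIV. \<Sum>g\<in>G D. if v L * g * u K = y \<and> x * y = z then \<alpha> x y * CD D l s t g else 0)"
    by (simp add: sum_distrib_left if_sum0 m_if if_if0 conj_commute cong: if_cong)
  also have "\<dots> = (\<Sum>g\<in>G D. \<Sum>y\<in>UNIV. if v L * g * u K = y \<and> x * y = z then \<alpha> x y * CD D l s t g else 0)"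
    by (rule sum.swap)
  also have "\<dots> = (\<Sum>g\<in>G D. if x * (v L * g * u K) = z then \<alpha> x (v L * g * u K) * CD D l s t g else 0)"
    by (simp add: sum_delta_conj)
  also have "\<dots> = (\<Sum>g\<in>G D. if x * v L * g * u K = z then \<alpha> x (v L) * CD D l s t g else 0)"
  proof (rule sum.cong[OF refl])
    fix g assume g: "g \<in> G D"
    have "\<alpha> x (v L * g * u K) = \<alpha> x (v L)" using tw_R dec_props(1)[OF D L K g] by blast
    then show "(if x * (v L * g * u K) = z then \<alpha> x (v L * g * u K) * CD D l s t g else 0) =
        (if x * v L * g * u K = z then \<alpha> x (v L) * CD D l s t g else 0)" by (simp add: mult.assoc)
  qed
  also have "\<dots> = \<alpha> x (v L) * (\<Sum>g\<in>G D. if x * v L * g * u K = z then CD D l s t g else 0)"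
    by (simp add: sum_distrib_left m_if)
  finally show "tw_mult \<alpha> (\<lambda>w. if w = x then 1 else 0) (cor_C st one u CD (D,l) (L,s) (K,t)) z =
      \<alpha> x (v L) * (\<Sum>g\<in>G D. if x * v L * g * u K = z then CD D l s t g else 0)" .
qed

lemma push_hC:
  assumes D: "D \<in> Dclasses" and l: "l \<in> \<Lambda>D D" and s: "s \<in> MD D l" and t: "t \<in> MD D l"
    and h: "h \<in> G D" and w: "v L' * h = w"
  shows "push D L' K (tw_mult (\<lambda>_ _. 1) (\<lambda>w. if w = h then 1 else 0) (CD D l s t)) z =
     (\<Sum>g\<in>G D. if w * g * u K = z then CD D l s t g else 0)"
proof -
  have "push D L' K (tw_mult (\<lambda>_ _. 1) (\<lambda>w. if w = h then 1 else 0) (CD D l s t)) z =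
     (\<Sum>g'\<in>G D. if v L' * g' * u K = z then (\<Sum>y\<in>UNIV. if h * y = g' then CD D l s t y else 0) else 0)"
    unfolding push_def tw_delta by (simp cong: if_cong)
  also have "\<dots> = (\<Sum>g'\<in>G D. \<Sum>y\<in>UNIV. if h * y = g' \<and> v L' * g' * u K = z then CD D l s t y else 0)"
    by (simp add: if_sum0 if_if0 conj_commute cong: if_cong)
  also have "\<dots> = (\<Sum>y\<in>UNIV. \<Sum>g'\<in>G D. if h * y = g' \<and> v L' * g' * u K = z then CD D l s t y else 0)"
    by (rule sum.swap)
  also have "\<dots> = (\<Sum>y\<in>UNIV. if h * y \<in> G D \<and> v L' * (h * y) * u K = z then CD D l s t y else 0)"
    by (simp add: sum_delta_conj[OF finG[OF D]])
  also have "\<dots> = (\<Sum>y\<in>UNIV. if y \<in> G D then (if w * y * u K = z then CD D l s t y else 0) else 0)"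
  proof (rule sum.cong[OF refl])
    fix y
    show "(if h * y \<in> G D \<and> v L' * (h * y) * u K = z then CD D l s t y else 0) =
        (if y \<in> G D then (if w * y * u K = z then CD D l s t y else 0) else 0)"
    proof (cases "y \<in> G D")
      case True
      then have "h * y \<in> G D" using G_mult[OF D h] by blast
      moreover have "v L' * (h * y) * u K = w * y * u K" using w by (simp add: mult.assoc[symmetric])
      ultimately show ?thesis using True by simp
    next
      case False
      then show ?thesis using CD_supp[OF D l s t False] by simp
    qed
  qed
  also have "\<dots> = (\<Sum>y\<in>G D. if w * y * u K = z then CD D l s t y else 0)"
    by (simp add: sum.If_cases)
  finally show ?thesis .
qed

end

context cor7 begin

lemma vL_D: "D \<in> Dclasses \<Longrightarrow> L \<in> Lclasses_in D \<Longrightarrow> v L \<in> D"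
  using v_L L_eq_D D_eq_sym D_mem by blast

lemma corM: "cor_M MD (D,l) = Lclasses_in D \<times> MD D l" unfolding cor_M_def by simp

lemma C3x:
  assumes D: "D \<in> Dclasses" and l: "l \<in> \<Lambda>D D" and L: "L \<in> Lclasses_in D" and s: "s \<in> MD D l"
  shows "\<exists>r. \<forall>Kt\<in>cor_M MD (D,l). (\<lambda>z. tw_mult \<alpha> (\<lambda>w. if w = x then 1 else 0) (cor_C st one u CD (D,l) (L,s) Kt) z
      - (\<Sum>s'\<in>cor_M MD (D,l). r s' * cor_C st one u CD (D,l) s' Kt z)) \<in> LSc (D,l)"
proof (cases "J_le (v L) (x * v L)")
  case False
  show ?thesis
  proof (intro exI[of _ "\<lambda>_. 0"] ballI)
    fix Kt assume Kt: "Kt \<in> cor_M MD (D,l)"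
    obtain K t where Kt': "Kt = (K,t)" by (cases Kt)
    have K: "K \<in> Lclasses_in D" using Kt Kt' corM by auto
    let ?f = "\<lambda>z. tw_mult \<alpha> (\<lambda>w. if w = x then 1 else 0) (cor_C st one u CD (D,l) (L,s) Kt) z
      - (\<Sum>s'\<in>cor_M MD (D,l). 0 * cor_C st one u CD (D,l) s' Kt z)"
    have "\<forall>z. ?f z \<noteq> 0 \<longrightarrow> Dclass_less (Dcl z) D"
    proof (intro allI impI)
      fix z assume nz: "?f z \<noteq> 0"
      then have "(\<Sum>g\<in>G D. if x * v L * g * u K = z then CD D l s t g else 0) \<noteq> 0"
        using xC[OF D L K, of x l s t] unfolding Kt' by auto
      then obtain g where g0: "g \<in> G D" "(if x * v L * g * u K = z then CD D l s t g else 0) \<noteq> 0"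
        by (rule sum.not_neutral_contains_not_neutral)
      then have g: "g \<in> G D" "x * v L * g * u K = z" by (auto split: if_splits)
      have zeq: "z = (x * v L) * (g * u K)" using g(2) by (simp add: mult.assoc)
      have "J_le z (v L)" unfolding J_le_def using zeq by blast
      then have le: "Dclass_le (Dcl z) D" unfolding Dclass_le_def using Dcl_self vL_D[OF D L] by blast
      have "Dcl z \<noteq> D"
      proof
        assume "Dcl z = D"
        then have "D_eq (v L) z" using vL_D[OF D L] Dcl_def D_eq_sym by auto
        then have "J_le (v L) z" using D_eq_J by blast
        moreover have "J_le z (x * v L)" using zeq by simp
        ultimately show False using False J_le_trans by blast
      qed
      then show "Dclass_less (Dcl z) D" using le unfolding Dclass_less_def by blast
    qed
    then show "?f \<in> LSc (D,l)" by (rule low_vanish[OF D])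
  qed
next
  case True
  define L' where "L' = Lcl (st (x * v L))"
  define h where "h = pq D L' * (x * v L)"
  have L': "L' \<in> Lclasses_in D" and h: "h \<in> G D" and vh: "v L' * h = x * v L"
    using left_factor[OF D L True] unfolding L'_def h_def by auto
  have "in_alg (G D) (\<lambda>w. if w = h then 1 else 0)" unfolding in_alg_def using h by auto
  then obtain rh where rh: "\<forall>t\<in>MD D l. (\<lambda>g. tw_mult (\<lambda>_ _. 1) (\<lambda>w. if w = h then 1 else 0) (CD D l s t) g
      - (\<Sum>s'\<in>MD D l. rh s' * CD D l s' t g)) \<in> lower_span (\<Lambda>D D) (leD D) (MD D) (CD D) l"
    using CD_C3'[OF D] l s by blast
  define A where "A = \<alpha> x (v L)"
  define r where "r = (\<lambda>p. if fst p = L' then A * rh (snd p) else 0)"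
  show ?thesis
  proof (intro exI[of _ r] ballI)
    fix Kt assume Kt: "Kt \<in> cor_M MD (D,l)"
    obtain K t where Kt': "Kt = (K,t)" by (cases Kt)
    have K: "K \<in> Lclasses_in D" and t: "t \<in> MD D l" using Kt Kt' corM by auto
    define SG where "SG = {j\<in>cell_index (\<Lambda>D D) (MD D). leD D (fst j) l \<and> fst j \<noteq> l}"
    obtain cc where cc: "(\<lambda>g. tw_mult (\<lambda>_ _. 1) (\<lambda>w. if w = h then 1 else 0) (CD D l s t) g
      - (\<Sum>s'\<in>MD D l. rh s' * CD D l s' t g)) = (\<lambda>g. \<Sum>j\<in>SG. cc j * CD D (fst j) (fst (snd j)) (snd (snd j)) g)"
      using rh t unfolding lower_span_def SG_def by blast
    have e1: "tw_mult \<alpha> (\<lambda>w. if w = x then 1 else 0) (cor_C st one u CD (D,l) (L,s) (K,t)) z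
       = A * push D L' K (tw_mult (\<lambda>_ _. 1) (\<lambda>w. if w = h then 1 else 0) (CD D l s t)) z" for z
      using xC[OF D L K, of x l s t] push_hC[OF D l s t h vh] unfolding A_def by simp
    have e2: "(\<Sum>p\<in>cor_M MD (D,l). r p * cor_C st one u CD (D,l) p (K,t) z)
       = A * (\<Sum>s'\<in>MD D l. rh s' * push D L' K (CD D l s' t) z)" for z
    proof -
      have "(\<Sum>p\<in>cor_M MD (D,l). r p * cor_C st one u CD (D,l) p (K,t) z)
         = (\<Sum>a\<in>Lclasses_in D. \<Sum>b\<in>MD D l. r (a,b) * cor_C st one u CD (D,l) (a,b) (K,t) z)"
        unfolding corM by (subst sum.cartesian_product) simp
      also have "\<dots> = (\<Sum>a\<in>Lclasses_in D. if a = L' then (\<Sum>b\<in>MD D l. A * rh b * cor_C st one u CD (D,l) (L',b) (K,t) z) else 0)"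
        unfolding r_def by (rule sum.cong[OF refl]) auto
      also have "\<dots> = (\<Sum>b\<in>MD D l. A * rh b * cor_C st one u CD (D,l) (L',b) (K,t) z)"
        using L' finite_Lcl by (simp add: sum.delta')
      also have "\<dots> = A * (\<Sum>s'\<in>MD D l. rh s' * push D L' K (CD D l s' t) z)"
        by (simp add: push_C sum_distrib_left mult.assoc)
      finally show ?thesis .
    qed
    have e3: "push D L' K (tw_mult (\<lambda>_ _. 1) (\<lambda>w. if w = h then 1 else 0) (CD D l s t)) z
        - (\<Sum>s'\<in>MD D l. rh s' * push D L' K (CD D l s' t) z)
        = (\<Sum>j\<in>SG. cc j * CC (emb D L' K j) z)" for z
    proof -
      have "push D L' K (tw_mult (\<lambda>_ _. 1) (\<lambda>w. if w = h then 1 else 0) (CD D l s t)) z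
        - (\<Sum>s'\<in>MD D l. rh s' * push D L' K (CD D l s' t) z)
        = push D L' K (\<lambda>g. tw_mult (\<lambda>_ _. 1) (\<lambda>w. if w = h then 1 else 0) (CD D l s t) g
      - (\<Sum>s'\<in>MD D l. rh s' * CD D l s' t g)) z"
        by (simp add: push_diff push_sum)
      also have "\<dots> = push D L' K (\<lambda>g. \<Sum>j\<in>SG. cc j * CD D (fst j) (fst (snd j)) (snd (snd j)) g) z"
        unfolding cc by (rule refl)
      also have "\<dots> = (\<Sum>j\<in>SG. cc j * CC (emb D L' K j) z)"
        unfolding push_sum by (simp add: push_C CC_def emb_def)
      finally show ?thesis .
    qed
    define proj where "proj = (\<lambda>i::('a set \<times> 'l) \<times> ('a set \<times> 'm) \<times> ('a set \<times> 'm). (snd (fst i), snd (fst (snd i)), snd (snd (snd i))))"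
    have sub: "emb D L' K ` SG \<subseteq> Slow (D,l)"
    proof
      fix i assume "i \<in> emb D L' K ` SG"
      then obtain j where j: "j \<in> SG" "i = emb D L' K j" by blast
      have "j \<in> IG D" using j(1) unfolding SG_def IG_def by blast
      then have "i \<in> II" using emb_II[OF D L' K] j by blast
      then show "i \<in> Slow (D,l)" using j unfolding Slow_def SG_def cor_le_def emb_def by auto
    qed
    have "(\<lambda>z. tw_mult \<alpha> (\<lambda>w. if w = x then 1 else 0) (cor_C st one u CD (D,l) (L,s) Kt) z
      - (\<Sum>s'\<in>cor_M MD (D,l). r s' * cor_C st one u CD (D,l) s' Kt z))
      = (\<lambda>z. \<Sum>i\<in>emb D L' K ` SG. (A * cc (proj i)) * CC i z)"
    proof (rule ext)
      fix z
      have "tw_mult \<alpha> (\<lambda>w. if w = x then 1 else 0) (cor_C st one u CD (D,l) (L,s) Kt) z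
        - (\<Sum>s'\<in>cor_M MD (D,l). r s' * cor_C st one u CD (D,l) s' Kt z)
        = A * (\<Sum>j\<in>SG. cc j * CC (emb D L' K j) z)"
        unfolding Kt' e1 e2 e3[symmetric] by (simp add: right_diff_distrib)
      also have "\<dots> = (\<Sum>j\<in>SG. (A * cc (proj (emb D L' K j))) * CC (emb D L' K j) z)"
        by (simp add: sum_distrib_left proj_def emb_def mult.assoc)
      also have "\<dots> = (\<Sum>i\<in>emb D L' K ` SG. (A * cc (proj i)) * CC i z)"
        by (rule sum.reindex[OF inj_on_subset[OF inj_emb subset_UNIV], unfolded comp_def, symmetric])
      finally show "tw_mult \<alpha> (\<lambda>w. if w = x then 1 else 0) (cor_C st one u CD (D,l) (L,s) Kt) z
        - (\<Sum>s'\<in>cor_M MD (D,l). r s' * cor_C st one u CD (D,l) s' Kt z)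
        = (\<Sum>i\<in>emb D L' K ` SG. (A * cc (proj i)) * CC i z)" .
    qed
    then show "(\<lambda>z. tw_mult \<alpha> (\<lambda>w. if w = x then 1 else 0) (cor_C st one u CD (D,l) (L,s) Kt) z
      - (\<Sum>s'\<in>cor_M MD (D,l). r s' * cor_C st one u CD (D,l) s' Kt z)) \<in> LSc (D,l)"
      by (rule LSc_I[OF sub])
  qed
qed

end

context cor7 begin

lemma finite_corL: "finite (cor_Lambda \<Lambda>D)" unfolding cor_Lambda_def
  by (rule finite_SigmaI) (auto intro: finL)

lemma corL_mem: "(D,l) \<in> cor_Lambda \<Lambda>D \<longleftrightarrow> D \<in> Dclasses \<and> l \<in> \<Lambda>D D"
  unfolding cor_Lambda_def by auto

lemma C3:
  assumes D: "D \<in> Dclasses" and l: "l \<in> \<Lambda>D D" and L: "L \<in> Lclasses_in D" and s: "s \<in> MD D l"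
  shows "\<exists>r. \<forall>Kt\<in>cor_M MD (D,l). (\<lambda>z. tw_mult \<alpha> a (cor_C st one u CD (D,l) (L,s) Kt) z
      - (\<Sum>s'\<in>cor_M MD (D,l). r s' * cor_C st one u CD (D,l) s' Kt z)) \<in> LSc (D,l)"
proof -
  have "\<forall>x. \<exists>r. \<forall>Kt\<in>cor_M MD (D,l). (\<lambda>z. tw_mult \<alpha> (\<lambda>w. if w = x then 1 else 0) (cor_C st one u CD (D,l) (L,s) Kt) z
      - (\<Sum>s'\<in>cor_M MD (D,l). r s' * cor_C st one u CD (D,l) s' Kt z)) \<in> LSc (D,l)"
    using C3x[OF D l L s] by blast
  from choice[OF this] obtain R where R: "\<forall>x. \<forall>Kt\<in>cor_M MD (D,l). (\<lambda>z. tw_mult \<alpha> (\<lambda>w. if w = x then 1 else 0) (cor_C st one u CD (D,l) (L,s) Kt) z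
      - (\<Sum>s'\<in>cor_M MD (D,l). R x s' * cor_C st one u CD (D,l) s' Kt z)) \<in> LSc (D,l)"
    by blast
  show ?thesis
  proof (intro exI[of _ "\<lambda>p. \<Sum>x\<in>UNIV. a x * R x p"] ballI)
    fix Kt assume Kt: "Kt \<in> cor_M MD (D,l)"
    let ?C = "\<lambda>p z. cor_C st one u CD (D,l) p Kt z"
    let ?X = "\<lambda>x z. tw_mult \<alpha> (\<lambda>w. if w = x then 1 else 0) (cor_C st one u CD (D,l) (L,s) Kt) z"
    let ?M = "cor_M MD (D,l)"
    have eq: "(\<lambda>z. tw_mult \<alpha> a (cor_C st one u CD (D,l) (L,s) Kt) z - (\<Sum>p\<in>?M. (\<Sum>x\<in>UNIV. a x * R x p) * ?C p z))
      = (\<lambda>z. \<Sum>x\<in>UNIV. a x * (?X x z - (\<Sum>p\<in>?M. R x p * ?C p z)))"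
    proof (rule ext)
      fix z
      have "(\<Sum>p\<in>?M. (\<Sum>x\<in>UNIV. a x * R x p) * ?C p z) = (\<Sum>p\<in>?M. \<Sum>x\<in>UNIV. a x * (R x p * ?C p z))"
        by (simp add: sum_distrib_right mult.assoc)
      also have "\<dots> = (\<Sum>x\<in>UNIV. \<Sum>p\<in>?M. a x * (R x p * ?C p z))" by (rule sum.swap)
      also have "\<dots> = (\<Sum>x\<in>UNIV. a x * (\<Sum>p\<in>?M. R x p * ?C p z))" by (simp add: sum_distrib_left)
      finally have 1: "(\<Sum>p\<in>?M. (\<Sum>x\<in>UNIV. a x * R x p) * ?C p z) = (\<Sum>x\<in>UNIV. a x * (\<Sum>p\<in>?M. R x p * ?C p z))" .
      have 2: "tw_mult \<alpha> a (cor_C st one u CD (D,l) (L,s) Kt) z = (\<Sum>x\<in>UNIV. a x * ?X x z)"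
        by (rule tw_expand)
      show "tw_mult \<alpha> a (cor_C st one u CD (D,l) (L,s) Kt) z - (\<Sum>p\<in>?M. (\<Sum>x\<in>UNIV. a x * R x p) * ?C p z)
        = (\<Sum>x\<in>UNIV. a x * (?X x z - (\<Sum>p\<in>?M. R x p * ?C p z)))"
        unfolding 1 2 by (simp add: right_diff_distrib sum_subtractf)
    qed
    have "(\<lambda>z. \<Sum>x\<in>UNIV. a x * (\<lambda>z. ?X x z - (\<Sum>p\<in>?M. R x p * ?C p z)) z) \<in> LSc (D,l)"
    proof (rule LS_comb, rule ballI)
      fix x show "(\<lambda>z. ?X x z - (\<Sum>p\<in>?M. R x p * ?C p z)) \<in> LSc (D,l)"
        using R Kt by blast
    qed
    then show "(\<lambda>z. tw_mult \<alpha> a (cor_C st one u CD (D,l) (L,s) Kt) z - (\<Sum>p\<in>?M. (\<Sum>x\<in>UNIV. a x * R x p) * ?C p z)) \<in> LSc (D,l)"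
      unfolding eq by simp
  qed
qed

theorem main: "cellular_algebra UNIV (tw_mult \<alpha>) (lin_star st)
           (cor_Lambda \<Lambda>D) (cor_le leD) (cor_M MD) (cor_C st one u CD)"
  unfolding cellular_algebra_def
proof (intro conjI)
  show "finite (UNIV :: 'a set)" by simp
  show "is_R_algebra UNIV (tw_mult \<alpha>)" by (rule is_R_alg[OF tw])
  show "finite (cor_Lambda \<Lambda>D)" by (rule finite_corL)
  show "\<forall>l\<in>cor_Lambda \<Lambda>D. finite (cor_M MD l)"
    unfolding cor_Lambda_def cor_M_def using finM finite_Lcl by auto
  show "\<forall>a\<in>cor_Lambda \<Lambda>D. cor_le leD a a"
    unfolding cor_Lambda_def cor_le_def using leD_refl by auto
  show "\<forall>a\<in>cor_Lambda \<Lambda>D. \<forall>b\<in>cor_Lambda \<Lambda>D. cor_le leD a b \<and> cor_le leD b a \<longrightarrow> a = b"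
  proof (intro ballI impI)
    fix a b assume a: "a \<in> cor_Lambda \<Lambda>D" and b: "b \<in> cor_Lambda \<Lambda>D" and ab: "cor_le leD a b \<and> cor_le leD b a"
    obtain D1 l1 where a': "a = (D1,l1)" by (cases a)
    obtain D2 l2 where b': "b = (D2,l2)" by (cases b)
    have m: "D1 \<in> Dclasses" "l1 \<in> \<Lambda>D D1" "D2 \<in> Dclasses" "l2 \<in> \<Lambda>D D2" using a b a' b' corL_mem by auto
    show "a = b"
    proof (cases "D1 = D2")
      case True
      then show ?thesis using ab a' b' m leD_antisym unfolding cor_le_def Dclass_less_def by auto
    next
      case False
      then have "Dclass_less D1 D2" "Dclass_less D2 D1" using ab a' b' unfolding cor_le_def by auto
      then show ?thesis using Dless_asym m by blast
    qed
  qed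
  show "\<forall>a\<in>cor_Lambda \<Lambda>D. \<forall>b\<in>cor_Lambda \<Lambda>D. \<forall>c\<in>cor_Lambda \<Lambda>D. cor_le leD a b \<and> cor_le leD b c \<longrightarrow> cor_le leD a c"
  proof (intro ballI impI)
    fix a b c assume a: "a \<in> cor_Lambda \<Lambda>D" and b: "b \<in> cor_Lambda \<Lambda>D" and c: "c \<in> cor_Lambda \<Lambda>D"
      and abc: "cor_le leD a b \<and> cor_le leD b c"
    obtain D1 l1 where a': "a = (D1,l1)" by (cases a)
    obtain D2 l2 where b': "b = (D2,l2)" by (cases b)
    obtain D3 l3 where c': "c = (D3,l3)" by (cases c)
    have m: "D1 \<in> Dclasses" "l1 \<in> \<Lambda>D D1" "D2 \<in> Dclasses" "l2 \<in> \<Lambda>D D2" "D3 \<in> Dclasses" "l3 \<in> \<Lambda>D D3"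
      using a b c a' b' c' corL_mem by auto
    have 1: "Dclass_less D1 D2 \<or> (D1 = D2 \<and> leD D1 l1 l2)" using abc a' b' unfolding cor_le_def by simp
    have 2: "Dclass_less D2 D3 \<or> (D2 = D3 \<and> leD D2 l2 l3)" using abc b' c' unfolding cor_le_def by simp
    have "Dclass_less D1 D3 \<or> (D1 = D3 \<and> leD D1 l1 l3)"
      using 1 2
    proof (elim disjE conjE)
      assume "Dclass_less D1 D2" "Dclass_less D2 D3" then show ?thesis using Dless_trans m by blast
    next
      assume "Dclass_less D1 D2" "D2 = D3" then show ?thesis by simp
    next
      assume "D1 = D2" "Dclass_less D2 D3" then show ?thesis by simp
    next
      assume "D1 = D2" "leD D1 l1 l2" "D2 = D3" "leD D2 l2 l3"
      then show ?thesis using leD_trans m by blast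
    qed
    then show "cor_le leD a c" using a' c' unfolding cor_le_def by simp
  qed
  show "\<forall>l\<in>cor_Lambda \<Lambda>D. \<forall>s\<in>cor_M MD l. \<forall>t\<in>cor_M MD l. in_alg UNIV (cor_C st one u CD l s t)"
    unfolding in_alg_def by simp
  show "\<forall>f. in_alg UNIV f \<longrightarrow>
        (\<exists>!r. (\<forall>i. i \<notin> cell_index (cor_Lambda \<Lambda>D) (cor_M MD) \<longrightarrow> r i = 0) \<and>
              f = (\<lambda>x. \<Sum>i\<in>cell_index (cor_Lambda \<Lambda>D) (cor_M MD). r i * cor_C st one u CD (fst i) (fst (snd i)) (snd (snd i)) x))"
    by (intro allI impI) (rule basis[unfolded II_def CC_def])
  show "alg_anti_involution UNIV (tw_mult \<alpha>) (lin_star st)" by (rule anti_inv[OF tw_st])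
  show "\<forall>l\<in>cor_Lambda \<Lambda>D. \<forall>s\<in>cor_M MD l. \<forall>t\<in>cor_M MD l. lin_star st (cor_C st one u CD l s t) = cor_C st one u CD l t s"
  proof (intro ballI)
    fix p Ls Kt assume p: "p \<in> cor_Lambda \<Lambda>D" and Ls: "Ls \<in> cor_M MD p" and Kt: "Kt \<in> cor_M MD p"
    obtain D l where p': "p = (D,l)" by (cases p)
    obtain L s where Ls': "Ls = (L,s)" by (cases Ls)
    obtain K t where Kt': "Kt = (K,t)" by (cases Kt)
    have "D \<in> Dclasses" "l \<in> \<Lambda>D D" "L \<in> Lclasses_in D" "K \<in> Lclasses_in D" "s \<in> MD D l" "t \<in> MD D l"
      using p Ls Kt p' Ls' Kt' corL_mem corM by auto
    then show "lin_star st (cor_C st one u CD p Ls Kt) = cor_C st one u CD p Kt Ls"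
      unfolding p' Ls' Kt' by (rule C2)
  qed
  show "\<forall>l\<in>cor_Lambda \<Lambda>D. \<forall>s\<in>cor_M MD l. \<forall>a. in_alg UNIV a \<longrightarrow>
        (\<exists>r. \<forall>t\<in>cor_M MD l. (\<lambda>x. tw_mult \<alpha> a (cor_C st one u CD l s t) x - (\<Sum>s'\<in>cor_M MD l. r s' * cor_C st one u CD l s' t x))
                        \<in> LSc l)"
  proof (intro ballI allI impI)
    fix p Ls a assume p: "p \<in> cor_Lambda \<Lambda>D" and Ls: "Ls \<in> cor_M MD p"
    obtain D l where p': "p = (D,l)" by (cases p)
    obtain L s where Ls': "Ls = (L,s)" by (cases Ls)
    have "D \<in> Dclasses" "l \<in> \<Lambda>D D" "L \<in> Lclasses_in D" "s \<in> MD D l"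
      using p Ls p' Ls' corL_mem corM by auto
    then show "\<exists>r. \<forall>t\<in>cor_M MD p. (\<lambda>x. tw_mult \<alpha> a (cor_C st one u CD p Ls t) x - (\<Sum>s'\<in>cor_M MD p. r s' * cor_C st one u CD p s' t x)) \<in> LSc p"
      unfolding p' Ls' by (rule C3)
  qed
qed

end

theorem corollary7:
  fixes st :: "'a::{semigroup_mult,finite} \<Rightarrow> 'a"
    and \<alpha> :: "'a \<Rightarrow> 'a \<Rightarrow> 'r::comm_ring_1"
    and one :: "'a set \<Rightarrow> 'a"
    and u :: "'a set \<Rightarrow> 'a"
    and \<Lambda>D :: "'a set \<Rightarrow> 'l set"
    and leD :: "'a set \<Rightarrow> 'l \<Rightarrow> 'l \<Rightarrow> bool"
    and MD :: "'a set \<Rightarrow> 'l \<Rightarrow> 'm set"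
    and CD :: "'a set \<Rightarrow> 'l \<Rightarrow> 'm \<Rightarrow> 'm \<Rightarrow> 'a \<Rightarrow> 'r"
  assumes "sg_anti_involution st"
    and "twisting \<alpha>"
    and "\<forall>x y. \<alpha> x y = \<alpha> (st y) (st x)"
    and "\<forall>D\<in>Dclasses. one D \<in> D \<and> one D * one D = one D \<and> st (one D) = one D"
    and "\<forall>x y z. R_eq y z \<longrightarrow> \<alpha> x y = \<alpha> x z"
    and "\<forall>D\<in>Dclasses. cellular_algebra (Hclass (one D)) (tw_mult (\<lambda>_ _. 1)) (lin_star st)
                          (\<Lambda>D D) (leD D) (MD D) (CD D)"
    and "\<forall>D\<in>Dclasses. \<forall>L\<in>Lclasses_in D. u L \<in> L \<and> R_eq (u L) (one D)"
  shows "cellular_algebra UNIV (tw_mult \<alpha>) (lin_star st)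
           (cor_Lambda \<Lambda>D) (cor_le leD) (cor_M MD) (cor_C st one u CD)"
proof -
  interpret cor7 st \<alpha> one u \<Lambda>D leD MD CD
    by (intro cor7.intro inv.intro cor7_axioms.intro; rule assms)
  show ?thesis by (rule main)
qed

end
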